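(* Let $m/n\in(0,1/2]$, $k\in\{0,\dots,m-1\}$ and $\gamma\in\{A,B\}$ (with $\gamma=B$ if $k=0$). An element $d=((N_r),\pi,(A,B,C))$ of $\mathcal D_n$ equals $d(P)$ for some $P\in\mathcal P(m/n,k,\gamma)$ if and only if: (a) for all $r>0$: (i) $\pi_1(r,s)=r+_nm$ for all $s$, and $\pi_2(r,s)$ is increasing in $s$; (ii) $\pi_2(r,0)=0$; (b) for $r=0$: (i) $0\in\gamma$; (ii) $\pi_1(0,0)=k$; (iii) if $c$ is the unique element of $C$ then $\pi(0,c)=(m,0)$; (iv) $\pi_1(0,s)\in\{k,\dots,m\}$ for all $s$ and is increasing in $s$; (v) if $s_1<s_2$, $\pi_1(0,s_1)=\pi_1(0,s_2)$ and $s_1\in B\cup C$, then $s_2\in B$; (vi) if $s_1<s_2$, $\pi_1(0,s_1)=\pi_1(0,s_2)$ and $s_1,s_2\in A$ (resp. $s_1,s_2\in B$), then $\pi_2(0,s_1)>\pi_2(0,s_2)$ (resp. $\pi_2(0,s_1)<\pi_2(0,s_2)$).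
   Context: For $n\ge2$, $\Gamma_n$ is an $n$-star with edges $e_0,\dots,e_{n-1}$ (initial points of valence 1, final points meeting at a central vertex $v$, cyclically ordered by index). For $m/n\in(0,1/2]$ in lowest terms, $f_{m/n}\colon\Gamma_n\to\Gamma_n$ has $f_{m/n}(e_0)=e_0\bar e_1e_1\cdots\bar e_me_m$ and $f_{m/n}(e_r)=e_{r+_nm}$ for $r\ne0$, expanding uniformly away from preimages of vertices. A $\ast$-orbit is a periodic orbit $P$ of $f_{m/n}$ with $P\ne\{v\}$, $P\cap e_r\ne\emptyset$ for all $r$, $f_{m/n}(P\cap e_0)\not\subseteq e_m$, and $f_{m/n}(p_r)=p_{r+_nm}$ for all $r\ne0$, where $p_r$ is the point of $P\cap e_r$ closest to the initial point of $e_r$. The span $\Gamma_n^P$ is the smallest connected set containing $P$; the truncation is $f^P_{m/n}=r_P\circ f_{m/n}\colon\Gamma^P_n\to\Gamma^P_n$ where $r_P$ is the identity on $\Gamma^P_n$ and sends $x\notin\Gamma^P_n$ to the endpoint of $\Gamma^P_n$ on the edge containing $x$. $\mathcal D_n$ is the set of triples $((N_0,\dots,N_{n-1}),\pi,(A,B,C))$ with each $N_r$ a positive integer, $\pi$ a cyclic permutation of $\mathcal L=\{(r,s)\colon0\le r<n,\,0\le s<N_r\}$, and $(A,B,C)$ a partition of $\{0,\dots,N_0-1\}$ with $\#C=1$. For a $\ast$-orbit $P$, its data $d(P)$ is given by $N_r=\#(P\cap e_r)$; the points of $P\cap e_r$ are labelled $(r,0),\dots,(r,N_r-1)$ from the initial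 to the final point of $e_r$, and $\pi=f_{m/n}|_P$ in this labelling; $s\in A$, $B$ or $C$ according as $f^P_{m/n}$ is locally orientation-reversing, locally orientation-preserving, or not locally injective at $(0,s)$. $\mathcal P(m/n,k,\gamma)$ is the set of $\ast$-orbits with $f_{m/n}((0,0))\in e_k$ and $0\in\gamma$. Write $\tau_1,\tau_2$ for the projections of $\mathcal L$ to the first and second coordinates, $\pi_1=\tau_1\circ\pi$, $\pi_2=\tau_2\circ\pi$. *)

theory Defs
  imports Complex_Main "HOL-Combinatorics.Permutations"
begin

(* Points of the n-star Gamma_n: the central vertex v, or a point of edge e_r
   with parameter t in [0,1) (t = 0 the initial valence-one point, t -> 1 towards v). *)
datatype gpt = Vtx | Pt nat real

definition gamma :: "nat \<Rightarrow> gpt set" where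
  "gamma n = insert Vtx {Pt r t | r t. r < n \<and> 0 \<le> t \<and> t < 1}"

definition mkpt :: "nat \<Rightarrow> real \<Rightarrow> gpt" where
  "mkpt r t = (if 1 \<le> t then Vtx else Pt r t)"

(* f_{m/n}: e_0 is cut into 2m+1 equal subintervals, mapped linearly onto
   e_0, \bar e_1, e_1, ..., \bar e_m, e_m; e_r (r>0) is mapped onto e_{r+m mod n}. *)
fun fmap :: "nat \<Rightarrow> nat \<Rightarrow> gpt \<Rightarrow> gpt" where
  "fmap m n Vtx = Vtx"
| "fmap m n (Pt r t) =
     (if r \<noteq> 0 then Pt ((r + m) mod n) t
      else (let s = real (2*m+1) * t; j = nat \<lfloor>s\<rfloor>; u = s - real j in
            if j = 0 then mkpt 0 u
            else if odd j then mkpt ((j+1) div 2) (1 - u)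
            else Pt (j div 2) u))"

definition periodic_orbit :: "nat \<Rightarrow> nat \<Rightarrow> gpt set \<Rightarrow> bool" where
  "periodic_orbit m n P \<longleftrightarrow>
     (\<exists>x\<in>gamma n. \<exists>p>0. (fmap m n ^^ p) x = x \<and> P = {(fmap m n ^^ k) x | k. True})"

definition ptsE :: "gpt set \<Rightarrow> nat \<Rightarrow> real set" where
  "ptsE P r = {t. Pt r t \<in> P}"

definition tmin :: "gpt set \<Rightarrow> nat \<Rightarrow> real" where
  "tmin P r = Min (ptsE P r)"

definition star_orbit :: "nat \<Rightarrow> nat \<Rightarrow> gpt set \<Rightarrow> bool" where
  "star_orbit m n P \<longleftrightarrow>
     periodic_orbit m n P \<and> P \<noteq> {Vtx} \<and>
     (\<forall>r<n. ptsE P r \<noteq> {}) \<and>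
     \<not> (fmap m n ` (P \<inter> {Pt 0 t | t. True}) \<subseteq> {Pt m t | t. True}) \<and>
     (\<forall>r. 0 < r \<and> r < n \<longrightarrow>
        fmap m n (Pt r (tmin P r)) = Pt ((r + m) mod n) (tmin P ((r + m) mod n)))"

(* labelling: (r,s) is the s-th point of P \<inter> e_r from the initial point *)
definition lab :: "gpt set \<Rightarrow> nat \<Rightarrow> nat \<Rightarrow> gpt" where
  "lab P r s = Pt r (sorted_list_of_set (ptsE P r) ! s)"

fun idx :: "gpt set \<Rightarrow> gpt \<Rightarrow> nat \<times> nat" where
  "idx P (Pt r t) = (r, card {t' \<in> ptsE P r. t' < t})"
| "idx P Vtx = undefined"

definition Lset :: "nat list \<Rightarrow> (nat \<times> nat) set" where
  "Lset N = {(r, s). r < length N \<and> s < N ! r}"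

definition dataN :: "nat \<Rightarrow> gpt set \<Rightarrow> nat list" where
  "dataN n P = map (\<lambda>r. card (ptsE P r)) [0..<n]"

(* pi = f|_P in the labelling, extended by the identity outside L *)
definition dataPi :: "nat \<Rightarrow> nat \<Rightarrow> gpt set \<Rightarrow> nat \<times> nat \<Rightarrow> nat \<times> nat" where
  "dataPi m n P = (\<lambda>(r, s). if (r, s) \<in> Lset (dataN n P)
                            then idx P (fmap m n (lab P r s)) else (r, s))"

(* span of P (smallest connected subset of the star containing P) *)
definition spanP :: "nat \<Rightarrow> gpt set \<Rightarrow> gpt set" where
  "spanP n P = insert Vtx {Pt r t | r t. r < n \<and> tmin P r \<le> t \<and> t < 1}"

definition retr :: "nat \<Rightarrow> gpt set \<Rightarrow> gpt \<Rightarrow> gpt" where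
  "retr n P x = (if x \<in> spanP n P then x
                 else (case x of Pt r t \<Rightarrow> Pt r (tmin P r) | Vtx \<Rightarrow> Vtx))"

definition fP :: "nat \<Rightarrow> nat \<Rightarrow> gpt set \<Rightarrow> gpt \<Rightarrow> gpt" where
  "fP m n P = retr n P \<circ> fmap m n"

definition nbhd :: "gpt set \<Rightarrow> real \<Rightarrow> real \<Rightarrow> real set" where
  "nbhd P t0 e = {t. tmin P 0 \<le> t \<and> t < 1 \<and> \<bar>t - t0\<bar> < e}"

definition loc_inj :: "nat \<Rightarrow> nat \<Rightarrow> gpt set \<Rightarrow> real \<Rightarrow> bool" where
  "loc_inj m n P t0 \<longleftrightarrow>
     (\<exists>e>0. inj_on (fP m n P) ((\<lambda>t. Pt 0 t) ` nbhd P t0 e))"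

definition loc_pres :: "nat \<Rightarrow> nat \<Rightarrow> gpt set \<Rightarrow> real \<Rightarrow> bool" where
  "loc_pres m n P t0 \<longleftrightarrow>
     (\<exists>e>0. \<exists>j. \<forall>t1\<in>nbhd P t0 e. \<forall>t2\<in>nbhd P t0 e. t1 < t2 \<longrightarrow>
        (\<exists>u1 u2. fP m n P (Pt 0 t1) = Pt j u1 \<and> fP m n P (Pt 0 t2) = Pt j u2 \<and> u1 < u2))"

definition loc_rev :: "nat \<Rightarrow> nat \<Rightarrow> gpt set \<Rightarrow> real \<Rightarrow> bool" where
  "loc_rev m n P t0 \<longleftrightarrow>
     (\<exists>e>0. \<exists>j. \<forall>t1\<in>nbhd P t0 e. \<forall>t2\<in>nbhd P t0 e. t1 < t2 \<longrightarrow>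
        (\<exists>u1 u2. fP m n P (Pt 0 t1) = Pt j u1 \<and> fP m n P (Pt 0 t2) = Pt j u2 \<and> u1 > u2))"

definition dataABC :: "nat \<Rightarrow> nat \<Rightarrow> gpt set \<Rightarrow> nat set \<times> nat set \<times> nat set" where
  "dataABC m n P =
     (let tt = (\<lambda>s. sorted_list_of_set (ptsE P 0) ! s); N0 = card (ptsE P 0) in
      ({s. s < N0 \<and> loc_rev m n P (tt s)},
       {s. s < N0 \<and> loc_pres m n P (tt s)},
       {s. s < N0 \<and> \<not> loc_inj m n P (tt s)}))"

definition dataP :: "nat \<Rightarrow> nat \<Rightarrow> gpt set \<Rightarrow>
    nat list \<times> (nat \<times> nat \<Rightarrow> nat \<times> nat) \<times> (nat set \<times> nat set \<times> nat set)" where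
  "dataP m n P = (dataN n P, dataPi m n P, dataABC m n P)"

definition inD :: "nat \<Rightarrow> nat list \<times> (nat \<times> nat \<Rightarrow> nat \<times> nat) \<times> (nat set \<times> nat set \<times> nat set) \<Rightarrow> bool" where
  "inD n d = (case d of (N, \<pi>, (A, B, C)) \<Rightarrow>
     length N = n \<and> (\<forall>r<n. 0 < N ! r) \<and>
     \<pi> permutes Lset N \<and> (\<forall>x\<in>Lset N. \<forall>y\<in>Lset N. \<exists>k. (\<pi> ^^ k) x = y) \<and>
     A \<union> B \<union> C = {..<N ! 0} \<and> A \<inter> B = {} \<and> A \<inter> C = {} \<and> B \<inter> C = {} \<and>
     card C = 1)"

(* gamma is encoded by a boolean: gB = True means gamma = B, otherwise gamma = A *)
definition Pset :: "nat \<Rightarrow> nat \<Rightarrow> nat \<Rightarrow> bool \<Rightarrow> gpt set \<Rightarrow> bool" where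
  "Pset m n k gB P \<longleftrightarrow> star_orbit m n P \<and> (\<exists>t. fmap m n (lab P 0 0) = Pt k t) \<and>
     0 \<in> (if gB then fst (snd (dataABC m n P)) else fst (dataABC m n P))"

end

theory Submission
  imports Defs
begin

definition gj :: "nat \<Rightarrow> nat \<Rightarrow> real \<Rightarrow> real" where
  "gj m J t = (if even J then real (2*m+1) * t - real J else real J + 1 - real (2*m+1) * t)"

lemma fmap0_int:
  assumes "0 \<le> t" "t < 1" "real J < real (2*m+1) * t" "real (2*m+1) * t < real J + 1"
  shows "fmap m n (Pt 0 t) = Pt ((J+1) div 2) (gj m J t)"
    and "0 < gj m J t" "gj m J t < 1"
proof -
  have fl: "nat \<lfloor>real (2*m+1) * t\<rfloor> = J"
    using assms by (simp add: floor_eq_iff nat_eq_iff)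
  show "0 < gj m J t" "gj m J t < 1" using assms by (auto simp: gj_def)
  show "fmap m n (Pt 0 t) = Pt ((J+1) div 2) (gj m J t)"
    using assms fl by (auto simp: Let_def mkpt_def gj_def elim!: oddE evenE)
qed

lemma fmap0_closed:
  assumes "real J \<le> real (2*m+1) * t" "real (2*m+1) * t \<le> real J + 1" "J \<le> 2*m" "0 \<le> t" "t \<le> 1"
  shows "fmap m n (mkpt 0 t) = mkpt ((J+1) div 2) (gj m J t)"
proof (cases "t = 1")
  case True
  then have "J = 2*m" using assms by simp
  then show ?thesis using True by (simp add: mkpt_def gj_def)
next
  case False
  then have t1: "t < 1" using assms by simp
  then have mk: "mkpt 0 t = Pt 0 t" by (simp add: mkpt_def)
  show ?thesis
  proof (cases "real (2*m+1) * t = real J + 1")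
    case True
    have fl: "nat \<lfloor>real (2*m+1) * t\<rfloor> = J + 1" using True
      by (metis floor_of_nat nat_int of_nat_1 of_nat_add)
    show ?thesis using True fl t1 by (auto simp: mk Let_def mkpt_def gj_def elim!: oddE evenE)
  next
    case False
    then have lt: "real (2*m+1) * t < real J + 1" using assms by simp
    have fl: "nat \<lfloor>real (2*m+1) * t\<rfloor> = J"
      using assms lt by (simp add: floor_eq_iff nat_eq_iff)
    show ?thesis using fl t1 assms lt by (auto simp: mk Let_def mkpt_def gj_def elim!: oddE evenE)
  qed
qed

lemma coprime_reach0:
  fixes m n r :: nat and S :: "nat set"
  assumes "0 < m" "coprime m n" "r \<in> S" "r < n"
    and cl: "\<And>r. r \<in> S \<Longrightarrow> 0 < r \<Longrightarrow> r < n \<Longrightarrow> (r + m) mod n \<in> S"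
  shows "0 \<in> S"
proof -
  obtain x y where xy: "m * x = n * y + gcd m n" using bezout_nat[of m n] assms(1) by auto
  then have xy1: "m * x = n * y + 1" using assms(2) by simp
  have step: "(r + i*m) mod n \<in> S \<or> 0 \<in> S" for i
  proof (induction i)
    case 0 then show ?case using assms by simp
  next
    case (Suc i)
    show ?case
    proof (cases "0 \<in> S")
      case True then show ?thesis by simp
    next
      case False
      then have A: "(r + i*m) mod n \<in> S" using Suc by simp
      with False have nz: "0 < (r + i*m) mod n" by (metis gr0I)
      have np: "0 < n" using assms(4) by simp
      have "((r + i*m) mod n + m) mod n \<in> S" using cl[OF A nz] np by simp
      moreover have "((r + i*m) mod n + m) mod n = (r + Suc i * m) mod n"
        by (metis mod_add_left_eq add.assoc mult_Suc add.commute)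
      ultimately show ?thesis by simp
    qed
  qed
  have "r + (x*(n-r))*m = n * (1 + (n-r)*y)"
  proof -
    have "r + (x*(n-r))*m = r + (n-r)*(m*x)" by (simp add: algebra_simps)
    also have "\<dots> = r + (n-r)*(n*y+1)" using xy1 by simp
    also have "\<dots> = n * (1 + (n-r)*y)"
    proof -
      obtain d where d: "n = r + d" using assms(4) by (metis less_imp_add_positive)
      show ?thesis unfolding d by (simp add: algebra_simps)
    qed
    finally show ?thesis .
  qed
  then have "(r + (x*(n-r))*m) mod n = 0" by simp
  then show ?thesis using step[of "x*(n-r)"] by auto
qed

lemma rank_nth:
  fixes T :: "real set"
  assumes "finite T" "s < card T"
  shows "card {t' \<in> T. t' < sorted_list_of_set T ! s} = s"
proof -
  let ?xl = "sorted_list_of_set T"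
  have len: "length ?xl = card T" by simp
  have sw: "sorted_wrt (<) ?xl" using assms(1) by simp
  have st: "set ?xl = T" using assms(1) by simp
  have mono: "i < j \<Longrightarrow> j < card T \<Longrightarrow> ?xl ! i < ?xl ! j" for i j
    using sw len by (simp add: sorted_wrt_iff_nth_less)
  have "{t' \<in> T. t' < ?xl ! s} = (\<lambda>i. ?xl ! i) ` {..<s}"
  proof
    show "{t' \<in> T. t' < ?xl ! s} \<subseteq> (\<lambda>i. ?xl ! i) ` {..<s}"
    proof
      fix t assume "t \<in> {t' \<in> T. t' < ?xl ! s}"
      then have tT: "t \<in> T" and lt: "t < ?xl ! s" by auto
      then obtain i where i: "i < card T" "?xl ! i = t" using st len by (metis in_set_conv_nth)
      have "i < s"
      proof (rule ccontr)
        assume "\<not> i < s"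
        then have "s = i \<or> s < i" by auto
        then show False using mono[of s i] i lt by auto
      qed
      then show "t \<in> (\<lambda>i. ?xl ! i) ` {..<s}" using i by auto
    qed
    show "(\<lambda>i. ?xl ! i) ` {..<s} \<subseteq> {t' \<in> T. t' < ?xl ! s}"
      using mono assms(2) st len by (auto intro: nth_mem)
  qed
  moreover have "inj_on (\<lambda>i. ?xl ! i) {..<s}"
    using mono assms(2) by (auto simp: inj_on_def) (metis less_trans linorder_neqE_nat order_less_irrefl)
  ultimately show ?thesis by (simp add: card_image)
qed

lemma sorted_list_image:
  fixes f :: "nat \<Rightarrow> real"
  assumes "\<And>i j. i < j \<Longrightarrow> j < N \<Longrightarrow> f i < f j"
  shows "sorted_list_of_set (f ` {..<N}) = map f [0..<N]" and "card (f ` {..<N}) = N"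
proof -
  have inj: "inj_on f {..<N}"
    using assms by (auto simp: inj_on_def) (metis linorder_neqE_nat order_less_irrefl)
  then show c: "card (f ` {..<N}) = N" by (simp add: card_image)
  have "sorted_wrt (<) (map f [0..<N])"
    using assms by (auto simp: sorted_wrt_iff_nth_less)
  moreover have "set (map f [0..<N]) = f ` {..<N}" by auto
  moreover have "length (map f [0..<N]) = card (f ` {..<N})" using c by simp
  ultimately show "sorted_list_of_set (f ` {..<N}) = map f [0..<N]"
    using sorted_list_of_set_unique[of "f ` {..<N}" "map f [0..<N]"] by auto
qed

definition goodP :: "nat \<Rightarrow> nat \<Rightarrow> gpt set \<Rightarrow> bool" where
  "goodP m n P \<longleftrightarrow> finite P \<and> P \<subseteq> gamma n \<and> Vtx \<notin> P \<and> (\<forall>x\<in>P. fmap m n x \<in> P) \<and>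
     (\<forall>x\<in>P. \<forall>y\<in>P. \<exists>k. (fmap m n ^^ k) x = y) \<and> (\<forall>r<n. ptsE P r \<noteq> {}) \<and>
     (\<forall>r. 0 < r \<and> r < n \<longrightarrow>
        fmap m n (Pt r (tmin P r)) = Pt ((r + m) mod n) (tmin P ((r + m) mod n)))"

lemma funpow_in: "(\<forall>x\<in>P. f x \<in> P) \<Longrightarrow> x \<in> P \<Longrightarrow> (f ^^ k) x \<in> P"
  by (induction k) auto

lemma fmap_Pt0_0: "fmap m n (Pt 0 0) = Pt 0 0"
  by (simp add: Let_def mkpt_def)

lemma fmap_Pt_pos: "r \<noteq> 0 \<Longrightarrow> fmap m n (Pt r t) = Pt ((r + m) mod n) t"
  by simp

locale mn =
  fixes m n :: nat
  assumes m_pos: "0 < m" and mn: "2*m \<le> n" and cop: "coprime m n"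
begin

lemma m_lt_n: "m < n" using m_pos mn by simp
lemma n_ge2: "2 \<le> n" using m_pos mn by simp

context
  fixes P assumes gp: "goodP m n P"
begin

lemma gp_fin: "finite P" using gp by (simp add: goodP_def)
lemma gp_noV: "Vtx \<notin> P" using gp by (simp add: goodP_def)
lemma gp_cl: "x \<in> P \<Longrightarrow> fmap m n x \<in> P" using gp by (simp add: goodP_def)
lemma gp_tr: "x \<in> P \<Longrightarrow> y \<in> P \<Longrightarrow> \<exists>k. (fmap m n ^^ k) x = y" using gp by (simp add: goodP_def)
lemma gp_ne: "r < n \<Longrightarrow> ptsE P r \<noteq> {}" using gp by (simp add: goodP_def)
lemma gp_star: "0 < r \<Longrightarrow> r < n \<Longrightarrow>
   fmap m n (Pt r (tmin P r)) = Pt ((r + m) mod n) (tmin P ((r + m) mod n))"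
  using gp by (simp add: goodP_def)

lemma gp_pt: "Pt r t \<in> P \<Longrightarrow> r < n \<and> 0 \<le> t \<and> t < 1"
  using gp by (auto simp: goodP_def gamma_def)

lemma gp_ptsE: "t \<in> ptsE P r \<Longrightarrow> r < n \<and> 0 \<le> t \<and> t < 1"
  using gp_pt by (simp add: ptsE_def)

lemma gp_ptsE_fin: "finite (ptsE P r)"
proof -
  have "ptsE P r \<subseteq> (\<lambda>x. case x of Pt r t \<Rightarrow> t | Vtx \<Rightarrow> 0) ` P"
    by (force simp: ptsE_def image_iff)
  then show ?thesis using gp_fin finite_surj by blast
qed

lemma gp_tmin: "r < n \<Longrightarrow> tmin P r \<in> ptsE P r \<and> (\<forall>t\<in>ptsE P r. tmin P r \<le> t)"
  using gp_ptsE_fin gp_ne by (simp add: tmin_def)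

lemma gp_tmin_in: "r < n \<Longrightarrow> Pt r (tmin P r) \<in> P"
  using gp_tmin by (simp add: ptsE_def)

lemma gp_inj: "inj_on (fmap m n) P"
proof (rule finite_surj_inj[OF gp_fin])
  show "P \<subseteq> fmap m n ` P"
  proof
    fix y assume y: "y \<in> P"
    obtain k where k: "(fmap m n ^^ k) (fmap m n y) = y" using gp_tr[OF gp_cl[OF y] y] by blast
    show "y \<in> fmap m n ` P"
    proof (cases k)
      case 0 then show ?thesis using k y by (metis funpow_0 image_eqI)
    next
      case (Suc k')
      have "y = fmap m n ((fmap m n ^^ k') (fmap m n y))" using k Suc by (simp del: funpow.simps add: funpow_Suc_right[symmetric] funpow.simps(2)) 
      moreover have "(fmap m n ^^ k') (fmap m n y) \<in> P"
        using funpow_in[of P "fmap m n"] gp gp_cl[OF y] by (simp add: goodP_def)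
      ultimately show ?thesis by blast
    qed
  qed
qed

lemma gp_no0: "Pt r 0 \<notin> P"
proof
  assume a: "Pt r 0 \<in> P"
  let ?S = "{r. r < n \<and> Pt r 0 \<in> P}"
  have "0 \<in> ?S"
  proof (rule coprime_reach0[OF m_pos cop])
    show "r \<in> ?S" using a gp_pt[OF a] by simp
    show "r < n" using gp_pt[OF a] by simp
    fix r assume r: "r \<in> ?S" "0 < r" "r < n"
    have "tmin P r = 0" using gp_tmin[of r] r gp_ptsE[of _ r]
      by (simp add: ptsE_def) (smt (verit))
    then have "fmap m n (Pt r 0) = Pt ((r + m) mod n) (tmin P ((r + m) mod n))"
      using gp_star[of r] r by simp
    moreover have "fmap m n (Pt r 0) = Pt ((r + m) mod n) 0" using r by simp
    moreover have "Pt r 0 \<in> P" using r by simp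
    then have "fmap m n (Pt r 0) \<in> P" by (rule gp_cl)
    ultimately show "(r + m) mod n \<in> ?S" using n_ge2 by auto
  qed
  then have z: "Pt 0 0 \<in> P" by simp
  have fx: "(fmap m n ^^ k) (Pt 0 0) = Pt 0 0" for k
    by (induction k) (auto simp: mkpt_def)
  obtain t where "t \<in> ptsE P 1" using gp_ne[of 1] n_ge2 by auto
  then have "Pt 1 t \<in> P" by (simp add: ptsE_def)
  then obtain k where "(fmap m n ^^ k) (Pt 0 0) = Pt 1 t" using gp_tr z by blast
  then show False using fx by simp
qed

end
end

lemma retr_Pt: "retr n P (Pt j u) = (if j < n \<and> tmin P j \<le> u \<and> u < 1 then Pt j u else Pt j (tmin P j))"
  by (auto simp: retr_def spanP_def)

lemma nbhd_mono: "e \<le> e' \<Longrightarrow> nbhd P t0 e \<subseteq> nbhd P t0 e'"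
  by (auto simp: nbhd_def)

lemma pres_inj: "loc_pres m n P t0 \<Longrightarrow> loc_inj m n P t0"
proof -
  assume "loc_pres m n P t0"
  then obtain e j where e: "e > 0" and H: "\<forall>t1\<in>nbhd P t0 e. \<forall>t2\<in>nbhd P t0 e. t1 < t2 \<longrightarrow>
        (\<exists>u1 u2. fP m n P (Pt 0 t1) = Pt j u1 \<and> fP m n P (Pt 0 t2) = Pt j u2 \<and> u1 < u2)"
    unfolding loc_pres_def by blast
  have "inj_on (fP m n P) ((\<lambda>t. Pt 0 t) ` nbhd P t0 e)"
    unfolding inj_on_def
  proof (intro ballI impI)
    fix a b assume ab: "a \<in> (\<lambda>t. Pt 0 t) ` nbhd P t0 e" "b \<in> (\<lambda>t. Pt 0 t) ` nbhd P t0 e" "fP m n P a = fP m n P b"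
    then obtain t1 t2 where t: "t1 \<in> nbhd P t0 e" "t2 \<in> nbhd P t0 e" "fP m n P (Pt 0 t1) = fP m n P (Pt 0 t2)"
      and ab': "a = Pt 0 t1" "b = Pt 0 t2" by auto
    have "t1 = t2"
    proof (rule ccontr)
      assume "t1 \<noteq> t2"
      then have "t1 < t2 \<or> t2 < t1" by auto
      then show False using H t by (metis gpt.inject order_less_irrefl)
    qed
    then show "a = b" using ab' by simp
  qed
  then show ?thesis using e unfolding loc_inj_def by blast
qed

lemma rev_inj: "loc_rev m n P t0 \<Longrightarrow> loc_inj m n P t0"
proof -
  assume "loc_rev m n P t0"
  then obtain e j where e: "e > 0" and H: "\<forall>t1\<in>nbhd P t0 e. \<forall>t2\<in>nbhd P t0 e. t1 < t2 \<longrightarrow>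
        (\<exists>u1 u2. fP m n P (Pt 0 t1) = Pt j u1 \<and> fP m n P (Pt 0 t2) = Pt j u2 \<and> u1 > u2)"
    unfolding loc_rev_def by blast
  have "inj_on (fP m n P) ((\<lambda>t. Pt 0 t) ` nbhd P t0 e)"
    unfolding inj_on_def
  proof (intro ballI impI)
    fix a b assume ab: "a \<in> (\<lambda>t. Pt 0 t) ` nbhd P t0 e" "b \<in> (\<lambda>t. Pt 0 t) ` nbhd P t0 e" "fP m n P a = fP m n P b"
    then obtain t1 t2 where t: "t1 \<in> nbhd P t0 e" "t2 \<in> nbhd P t0 e" "fP m n P (Pt 0 t1) = fP m n P (Pt 0 t2)"
      and ab': "a = Pt 0 t1" "b = Pt 0 t2" by auto
    have "t1 = t2"
    proof (rule ccontr)
      assume "t1 \<noteq> t2"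
      then have "t1 < t2 \<or> t2 < t1" by auto
      then show False using H t by (metis gpt.inject order_less_irrefl)
    qed
    then show "a = b" using ab' by simp
  qed
  then show ?thesis using e unfolding loc_inj_def by blast
qed

lemma two_pts:
  assumes "tmin P 0 \<le> t0" "t0 < 1" "e > 0"
  shows "t0 \<in> nbhd P t0 e" "t0 + min e (1 - t0) / 2 \<in> nbhd P t0 e" "t0 < t0 + min e (1 - t0) / 2"
  using assms by (auto simp: nbhd_def min_def field_simps)

lemma not_pres_rev:
  assumes "tmin P 0 \<le> t0" "t0 < 1" "loc_pres m n P t0" "loc_rev m n P t0"
  shows False
proof -
  obtain e1 j1 where e1: "e1 > 0" and H1: "\<forall>t1\<in>nbhd P t0 e1. \<forall>t2\<in>nbhd P t0 e1. t1 < t2 \<longrightarrow>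
        (\<exists>u1 u2. fP m n P (Pt 0 t1) = Pt j1 u1 \<and> fP m n P (Pt 0 t2) = Pt j1 u2 \<and> u1 < u2)"
    using assms(3) unfolding loc_pres_def by blast
  obtain e2 j2 where e2: "e2 > 0" and H2: "\<forall>t1\<in>nbhd P t0 e2. \<forall>t2\<in>nbhd P t0 e2. t1 < t2 \<longrightarrow>
        (\<exists>u1 u2. fP m n P (Pt 0 t1) = Pt j2 u1 \<and> fP m n P (Pt 0 t2) = Pt j2 u2 \<and> u1 > u2)"
    using assms(4) unfolding loc_rev_def by blast
  define e where "e = min e1 e2"
  have e: "e > 0" using e1 e2 by (simp add: e_def)
  define t2 where "t2 = t0 + min e (1 - t0) / 2"
  have a: "t0 \<in> nbhd P t0 e" "t2 \<in> nbhd P t0 e" "t0 < t2"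
    using two_pts[OF assms(1,2) e] unfolding t2_def by blast+
  have s1: "nbhd P t0 e \<subseteq> nbhd P t0 e1" "nbhd P t0 e \<subseteq> nbhd P t0 e2"
    by (auto intro!: nbhd_mono simp: e_def)
  obtain u1 u2 where A: "fP m n P (Pt 0 t0) = Pt j1 u1" "fP m n P (Pt 0 t2) = Pt j1 u2" "u1 < u2"
    using H1 a s1 by blast
  obtain v1 v2 where B: "fP m n P (Pt 0 t0) = Pt j2 v1" "fP m n P (Pt 0 t2) = Pt j2 v2" "v1 > v2"
    using H2 a s1 by blast
  show False using A B by auto
qed

context mn begin

context
  fixes P assumes gp: "goodP m n P"
begin

lemma gp_int:
  assumes "Pt 0 t \<in> P"
  shows "real (nat \<lfloor>real (2*m+1) * t\<rfloor>) < real (2*m+1) * t"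
    and "real (2*m+1) * t < real (nat \<lfloor>real (2*m+1) * t\<rfloor>) + 1"
proof -
  have t: "0 \<le> t" "t < 1" using gp_pt[OF gp assms] by auto
  define J where "J = nat \<lfloor>real (2*m+1) * t\<rfloor>"
  have nn: "0 \<le> real (2*m+1) * t" using t by simp
  have le: "real J \<le> real (2*m+1) * t" and lt: "real (2*m+1) * t < real J + 1"
    using nn unfolding J_def by linarith+
  show "real (2*m+1) * t < real (nat \<lfloor>real (2*m+1) * t\<rfloor>) + 1" using lt by (simp add: J_def)
  show "real (nat \<lfloor>real (2*m+1) * t\<rfloor>) < real (2*m+1) * t"
  proof (rule ccontr)
    assume "\<not> ?thesis"
    then have eq: "real (2*m+1) * t = real J" using le by (simp add: J_def)
    have img: "fmap m n (Pt 0 t) \<in> P" using gp_cl[OF gp assms] .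
    show False
    proof (cases "J = 0")
      case True
      then have "t = 0" using eq by simp
      then show False using assms gp_no0[OF gp] by simp
    next
      case False
      have fl: "nat \<lfloor>real (2*m+1) * t\<rfloor> = J" by (simp add: J_def)
      show False
      proof (cases "odd J")
        case True
        then have "fmap m n (Pt 0 t) = Vtx" using fl eq False by (simp add: Let_def mkpt_def)
        then show False using img gp_noV[OF gp] by simp
      next
        case ev: False
        then have "fmap m n (Pt 0 t) = Pt (J div 2) 0" using fl eq False by (simp add: Let_def mkpt_def)
        then show False using img gp_no0[OF gp] by simp
      qed
    qed
  qed
qed

lemma gp_f0:
  assumes "Pt 0 t \<in> P"
  shows "fmap m n (Pt 0 t) = Pt ((nat \<lfloor>real (2*m+1) * t\<rfloor> + 1) div 2) (gj m (nat \<lfloor>real (2*m+1) * t\<rfloor>) t)"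
    and "nat \<lfloor>real (2*m+1) * t\<rfloor> \<le> 2*m"
    and "0 < gj m (nat \<lfloor>real (2*m+1) * t\<rfloor>) t" "gj m (nat \<lfloor>real (2*m+1) * t\<rfloor>) t < 1"
proof -
  have t: "0 \<le> t" "t < 1" using gp_pt[OF gp assms] by auto
  note i = gp_int[OF assms]
  show "fmap m n (Pt 0 t) = Pt ((nat \<lfloor>real (2*m+1) * t\<rfloor> + 1) div 2) (gj m (nat \<lfloor>real (2*m+1) * t\<rfloor>) t)"
    "0 < gj m (nat \<lfloor>real (2*m+1) * t\<rfloor>) t" "gj m (nat \<lfloor>real (2*m+1) * t\<rfloor>) t < 1"
    using fmap0_int[OF t i] by auto
  have "real (nat \<lfloor>real (2*m+1) * t\<rfloor>) < real (2*m+1)" using i(1) t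
    by (smt (verit, ccfv_SIG) mult_left_le of_nat_0_le_iff)
  then show "nat \<lfloor>real (2*m+1) * t\<rfloor> \<le> 2*m" by linarith
qed

lemma gp_C3:
  assumes "Pt 0 t \<in> P" "J = nat \<lfloor>real (2*m+1) * t\<rfloor>" "gj m J t = tmin P ((J+1) div 2)"
  shows "(J+1) div 2 = m"
proof (rule ccontr)
  assume ne: "(J+1) div 2 \<noteq> m"
  define j where "j = (J+1) div 2"
  have jm: "j \<le> m" using gp_f0(2)[OF assms(1)] assms(2) by (simp add: j_def)
  then have jn: "j < n" using m_lt_n by simp
  define r where "r = (j + n - m) mod n"
  have jm': "j \<noteq> m" using ne by (simp add: j_def)
  have r0: "r \<noteq> 0"
  proof
    assume "r = 0"
    then have "n dvd (j + n - m)" by (simp add: r_def mod_eq_0_iff_dvd)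
    moreover have "0 < j + n - m" "j + n - m < 2*n" using m_lt_n jn by auto
    ultimately have "j + n - m = n"
    proof -
      assume d: "n dvd (j + n - m)" and b: "0 < j + n - m" "j + n - m < 2*n"
      obtain q where q: "j + n - m = n * q" using d by blast
      have "q \<noteq> 0" using q b by auto
      moreover have "q < 2" using q b by (metis mult.commute mult_less_cancel2)
      ultimately have "q = 1" by simp
      then show ?thesis using q by simp
    qed
    then show False using jm' m_lt_n by simp
  qed
  have rn: "r < n" using n_ge2 by (simp add: r_def)
  have rm: "(r + m) mod n = j"
  proof -
    have "(r + m) mod n = ((j + n - m) + m) mod n" by (simp add: r_def mod_add_left_eq)
    also have "\<dots> = (j + n) mod n" using m_lt_n by simp
    also have "\<dots> = j" using jn by simp
    finally show ?thesis .
  qed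
  have "fmap m n (Pt r (tmin P r)) = Pt j (tmin P j)" using gp_star[OF gp, of r] r0 rn rm by simp
  also have "\<dots> = fmap m n (Pt 0 t)" using gp_f0(1)[OF assms(1)] assms(2,3) by (simp add: j_def)
  finally have "Pt r (tmin P r) = Pt 0 t"
    using inj_onD[OF gp_inj[OF gp]] gp_tmin_in[OF gp rn] assms(1) by blast
  then show False using r0 by simp
qed

end
end

lemma half_lt: "(X::real) \<le> Y \<Longrightarrow> 0 < Y \<Longrightarrow> X/2 < Y" by linarith

context mn begin

context
  fixes P assumes gp: "goodP m n P"
begin

lemma gp_aff:
  assumes P0: "Pt 0 t0 \<in> P" and J: "J = nat \<lfloor>real (2*m+1) * t0\<rfloor>"
    and lt: "tmin P ((J+1) div 2) < gj m J t0"
  shows "\<exists>e>0. \<forall>t\<in>nbhd P t0 e. fP m n P (Pt 0 t) = Pt ((J+1) div 2) (gj m J t)"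
proof -
  define Mr where "Mr = real (2*m+1)"
  have Mr: "Mr \<ge> 1" by (simp add: Mr_def)
  define j where "j = (J+1) div 2"
  have i1: "real J < Mr * t0" and i2: "Mr * t0 < real J + 1" using gp_int[OF gp P0] J by (simp_all add: Mr_def)
  have Jm: "J \<le> 2*m" using gp_f0(2)[OF gp P0] J by simp
  have jn: "j < n" using Jm m_lt_n by (simp add: j_def)
  define e where "e = min (min (t0 - real J / Mr) ((real J + 1) / Mr - t0)) ((gj m J t0 - tmin P j) / Mr)"
  have e: "e > 0" using i1 i2 Mr lt by (simp add: e_def j_def field_simps)
  have tm0: "0 \<le> tmin P 0" using gp_tmin[OF gp, of 0] gp_ptsE[OF gp] n_ge2 by auto
  have "\<forall>t\<in>nbhd P t0 e. fP m n P (Pt 0 t) = Pt j (gj m J t)"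
  proof
    fix t assume t: "t \<in> nbhd P t0 e"
    then have t1: "tmin P 0 \<le> t" "t < 1" "\<bar>t - t0\<bar> < e" by (auto simp: nbhd_def)
    have e1: "e \<le> t0 - real J / Mr" "e \<le> (real J + 1) / Mr - t0" "e \<le> (gj m J t0 - tmin P j) / Mr"
      by (simp_all add: e_def)
    have a1: "real J < Mr * t"
    proof -
      have "t > t0 - e" using t1 by linarith
      then have "t > real J / Mr" using e1 by linarith
      then show ?thesis using Mr by (simp add: field_simps)
    qed
    have a2: "Mr * t < real J + 1"
    proof -
      have "t < t0 + e" using t1 by linarith
      then have "t < (real J + 1) / Mr" using e1 by linarith
      then show ?thesis using Mr by (simp add: field_simps)
    qed
    have f: "fmap m n (Pt 0 t) = Pt j (gj m J t)" "0 < gj m J t" "gj m J t < 1"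
      using fmap0_int(1)[where t=t and J=J and m=m and n=n] fmap0_int(2,3)[where t=t and J=J and m=m] a1 a2 t1 tm0 by (simp_all add: Mr_def j_def)
    have "gj m J t - gj m J t0 = (if even J then Mr else -Mr) * (t - t0)"
      by (simp add: gj_def Mr_def algebra_simps)
    then have "\<bar>gj m J t - gj m J t0\<bar> = Mr * \<bar>t - t0\<bar>"
      using Mr by (simp add: abs_mult)
    also have "\<dots> < Mr * e" using t1 Mr by simp
    also have "\<dots> \<le> gj m J t0 - tmin P j" using e1(3) Mr by (simp add: field_simps)
    finally have "tmin P j < gj m J t" by linarith
    then show "fP m n P (Pt 0 t) = Pt j (gj m J t)"
      using f jn by (simp add: fP_def retr_Pt)
  qed
  then show ?thesis using e by (auto simp: j_def)
qed

lemma gp_AB: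
  assumes P0: "Pt 0 t0 \<in> P" and J: "J = nat \<lfloor>real (2*m+1) * t0\<rfloor>"
    and lt: "tmin P ((J+1) div 2) < gj m J t0"
  shows "even J \<Longrightarrow> loc_pres m n P t0 \<and> \<not> loc_rev m n P t0 \<and> loc_inj m n P t0"
    and "odd J \<Longrightarrow> loc_rev m n P t0 \<and> \<not> loc_pres m n P t0 \<and> loc_inj m n P t0"
proof -
  obtain e where e: "e > 0" and H: "\<forall>t\<in>nbhd P t0 e. fP m n P (Pt 0 t) = Pt ((J+1) div 2) (gj m J t)"
    using gp_aff[OF P0 J lt] by blast
  have tt: "tmin P 0 \<le> t0" "t0 < 1" using gp_tmin[OF gp, of 0] n_ge2 P0 gp_pt[OF gp P0] by (auto simp: ptsE_def)
  {
    assume ev: "even J"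
    have "\<forall>t1\<in>nbhd P t0 e. \<forall>t2\<in>nbhd P t0 e. t1 < t2 \<longrightarrow>
        (\<exists>u1 u2. fP m n P (Pt 0 t1) = Pt ((J+1) div 2) u1 \<and> fP m n P (Pt 0 t2) = Pt ((J+1) div 2) u2 \<and> u1 < u2)"
    proof (intro ballI impI)
      fix t1 t2 assume tt: "t1 \<in> nbhd P t0 e" "t2 \<in> nbhd P t0 e" "t1 < t2"
      show "\<exists>u1 u2. fP m n P (Pt 0 t1) = Pt ((J+1) div 2) u1 \<and> fP m n P (Pt 0 t2) = Pt ((J+1) div 2) u2 \<and> u1 < u2"
        using H tt ev by (intro exI[of _ "gj m J t1"] exI[of _ "gj m J t2"]) (simp add: gj_def)
    qed
    then have "loc_pres m n P t0" unfolding loc_pres_def using e by blast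
    then show "loc_pres m n P t0 \<and> \<not> loc_rev m n P t0 \<and> loc_inj m n P t0"
      using pres_inj not_pres_rev[OF tt] by blast
  }
  {
    assume od: "odd J"
    have "\<forall>t1\<in>nbhd P t0 e. \<forall>t2\<in>nbhd P t0 e. t1 < t2 \<longrightarrow>
        (\<exists>u1 u2. fP m n P (Pt 0 t1) = Pt ((J+1) div 2) u1 \<and> fP m n P (Pt 0 t2) = Pt ((J+1) div 2) u2 \<and> u1 > u2)"
    proof (intro ballI impI)
      fix t1 t2 assume tt: "t1 \<in> nbhd P t0 e" "t2 \<in> nbhd P t0 e" "t1 < t2"
      show "\<exists>u1 u2. fP m n P (Pt 0 t1) = Pt ((J+1) div 2) u1 \<and> fP m n P (Pt 0 t2) = Pt ((J+1) div 2) u2 \<and> u1 > u2"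
        using H tt od by (intro exI[of _ "gj m J t1"] exI[of _ "gj m J t2"]) (simp add: gj_def)
    qed
    then have "loc_rev m n P t0" unfolding loc_rev_def using e by blast
    then show "loc_rev m n P t0 \<and> \<not> loc_pres m n P t0 \<and> loc_inj m n P t0"
      using rev_inj not_pres_rev[OF tt] by blast
  }
qed

lemma gp_Cn:
  assumes P0: "Pt 0 t0 \<in> P" and J: "J = nat \<lfloor>real (2*m+1) * t0\<rfloor>"
    and eq: "gj m J t0 = tmin P ((J+1) div 2)" and gt: "tmin P 0 < t0"
  shows "\<not> loc_inj m n P t0" "\<not> loc_pres m n P t0" "\<not> loc_rev m n P t0"
proof -
  define Mr where "Mr = real (2*m+1)"
  have Mr: "Mr \<ge> 1" by (simp add: Mr_def)
  define j where "j = (J+1) div 2"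
  have i1: "real J < Mr * t0" and i2: "Mr * t0 < real J + 1" using gp_int[OF gp P0] J by (simp_all add: Mr_def)
  have Jm: "J \<le> 2*m" using gp_f0(2)[OF gp P0] J by simp
  have jn: "j < n" using Jm m_lt_n by (simp add: j_def)
  have tm0: "0 \<le> tmin P 0" using gp_tmin[OF gp, of 0] gp_ptsE[OF gp] n_ge2 by auto
  have t01: "t0 < 1" using gp_pt[OF gp P0] by simp
  have tmj: "tmin P j < 1" using gp_tmin[OF gp jn] gp_ptsE[OF gp] by blast
  have f0: "fP m n P (Pt 0 t0) = Pt j (tmin P j)"
    using gp_f0(1)[OF gp P0] J eq jn tmj by (simp add: fP_def retr_Pt j_def)
  have Jle: "(real J + 1) / Mr \<le> 1" using Jm by (simp add: Mr_def field_simps)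
  show ni: "\<not> loc_inj m n P t0"
  proof
    assume "loc_inj m n P t0"
    then obtain e where e: "e > 0" and inj: "inj_on (fP m n P) ((\<lambda>t. Pt 0 t) ` nbhd P t0 e)"
      unfolding loc_inj_def by blast
    obtain t' where t': "t' \<noteq> t0" "t' \<in> nbhd P t0 e" "real J < Mr * t'" "Mr * t' < real J + 1"
      "gj m J t' < gj m J t0"
    proof (cases "even J")
      case True
      define d where "d = min (min e (t0 - tmin P 0)) (t0 - real J / Mr) / 2"
      have d: "d > 0" using e gt i1 Mr by (simp add: d_def field_simps)
      have pos: "0 < t0 - real J / Mr" using i1 Mr by (simp add: field_simps)
      have mm: "min (min e (t0 - tmin P 0)) (t0 - real J / Mr) \<le> e"
        "min (min e (t0 - tmin P 0)) (t0 - real J / Mr) \<le> t0 - tmin P 0"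
        "min (min e (t0 - tmin P 0)) (t0 - real J / Mr) \<le> t0 - real J / Mr" by auto
      have dl1: "d < e" unfolding d_def using e gt pos mm by (intro half_lt) auto
      have dl2: "d < t0 - tmin P 0" unfolding d_def using e gt pos mm by (intro half_lt) auto
      have dl3: "d < t0 - real J / Mr" unfolding d_def using e gt pos mm by (intro half_lt) auto
      note dl = dl1 dl2 dl3
      show ?thesis
      proof (rule that[of "t0 - d"])
        show "t0 - d \<noteq> t0" using d by simp
        show "t0 - d \<in> nbhd P t0 e" using dl d t01 by (simp add: nbhd_def)
        show "real J < Mr * (t0 - d)" using dl(3) Mr by (simp add: field_simps)
        have "Mr * d > 0" using d Mr by simp
        moreover have "Mr * (t0 - d) = Mr * t0 - Mr * d" by (simp add: algebra_simps)
        ultimately show "Mr * (t0 - d) < real J + 1" using i2 by linarith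
        have "gj m J (t0 - d) = gj m J t0 - Mr * d" using True by (simp add: gj_def Mr_def algebra_simps)
        then show "gj m J (t0 - d) < gj m J t0" using \<open>Mr * d > 0\<close> by linarith
      qed
    next
      case False
      define d where "d = min e ((real J + 1) / Mr - t0) / 2"
      have d: "d > 0" using e i2 Mr by (simp add: d_def field_simps)
      have pos: "0 < (real J + 1) / Mr - t0" using i2 Mr by (simp add: field_simps)
      have mm: "min e ((real J + 1) / Mr - t0) \<le> e" "min e ((real J + 1) / Mr - t0) \<le> (real J + 1) / Mr - t0" by auto
      have dl1: "d < e" unfolding d_def using e pos mm by (intro half_lt) auto
      have dl2: "d < (real J + 1) / Mr - t0" unfolding d_def using e pos mm by (intro half_lt) auto
      note dl = dl1 dl2
      show ?thesis
      proof (rule that[of "t0 + d"])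
        show "t0 + d \<noteq> t0" using d by simp
        show "t0 + d \<in> nbhd P t0 e" using dl d t01 gt Jle by (simp add: nbhd_def)
        have "Mr * d > 0" using d Mr by simp
        moreover have "Mr * (t0 + d) = Mr * t0 + Mr * d" by (simp add: algebra_simps)
        ultimately show "real J < Mr * (t0 + d)" using i1 by linarith
        show "Mr * (t0 + d) < real J + 1" using dl(2) Mr by (simp add: field_simps)
        have "gj m J (t0 + d) = gj m J t0 - Mr * d" using False by (simp add: gj_def Mr_def algebra_simps)
        then show "gj m J (t0 + d) < gj m J t0" using \<open>Mr * d > 0\<close> by linarith
      qed
    qed
    have t'01: "0 \<le> t'" "t' < 1" using t'(2) tm0 by (auto simp: nbhd_def)
    have "fmap m n (Pt 0 t') = Pt j (gj m J t')" using fmap0_int(1)[OF t'01, where J=J and m=m and n=n] t'(3,4)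
      by (simp add: Mr_def j_def)
    then have "fP m n P (Pt 0 t') = Pt j (tmin P j)" using t'(5) eq
      by (simp add: fP_def retr_Pt j_def)
    then have "fP m n P (Pt 0 t') = fP m n P (Pt 0 t0)" using f0 by simp
    moreover have "t0 \<in> nbhd P t0 e" using e gt t01 by (simp add: nbhd_def)
    ultimately have "Pt 0 t' = Pt 0 t0" using inj t'(2) by (auto dest: inj_onD)
    then show False using t'(1) by simp
  qed
  show "\<not> loc_pres m n P t0" using ni pres_inj by blast
  show "\<not> loc_rev m n P t0" using ni rev_inj by blast
qed

end
end

lemma fmap_gamma:
  assumes "x \<in> gamma n" "m < n"
  shows "fmap m n x \<in> gamma n"
proof (cases x)
  case Vtx then show ?thesis using assms by simp
next
  case (Pt r t)
  then have rt: "r < n" "0 \<le> t" "t < 1" using assms by (auto simp: gamma_def)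
  show ?thesis
  proof (cases "r = 0")
    case False
    then show ?thesis using Pt rt by (auto simp: gamma_def)
  next
    case True
    define s where "s = real (2*m+1) * t"
    define j where "j = nat \<lfloor>s\<rfloor>"
    define u where "u = s - real j"
    have s0: "0 \<le> s" using rt by (simp add: s_def)
    have u: "0 \<le> u" "u < 1" using s0 by (simp_all add: u_def j_def) linarith+
    have "s < real (2*m+1)" using rt by (simp add: s_def)
    then have jm: "j \<le> 2*m" using s0 by (simp add: j_def) linarith
    have mk: "mkpt r' v \<in> gamma n" if "r' < n" "0 \<le> v" for r' v
      using that by (auto simp: mkpt_def gamma_def)
    have "fmap m n x = (if j = 0 then mkpt 0 u else if odd j then mkpt ((j+1) div 2) (1 - u)
            else Pt (j div 2) u)"
      using Pt True by (simp add: Let_def s_def j_def u_def)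
    moreover have "(j+1) div 2 < n" "j div 2 < n" using jm assms(2) by linarith+
    moreover have "mkpt 0 u \<in> gamma n" "mkpt ((j+1) div 2) (1 - u) \<in> gamma n"
      using mk[of 0 u] mk[of "(j+1) div 2" "1 - u"] u assms(2) \<open>(j+1) div 2 < n\<close> by auto
    moreover have "Pt (j div 2) u \<in> gamma n" using u \<open>j div 2 < n\<close> by (auto simp: gamma_def)
    ultimately show ?thesis by auto
  qed
qed

definition xx :: "gpt set \<Rightarrow> nat \<Rightarrow> nat \<Rightarrow> real" where
  "xx P r s = sorted_list_of_set (ptsE P r) ! s"

context mn begin

lemma star_good:
  assumes "star_orbit m n P"
  shows "goodP m n P"
proof -
  obtain x p where x: "x \<in> gamma n" "p > 0" "(fmap m n ^^ p) x = x" and P: "P = {(fmap m n ^^ k) x | k. True}"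
    using assms unfolding star_orbit_def periodic_orbit_def by blast
  let ?f = "fmap m n"
  have modk: "(?f ^^ k) x = (?f ^^ (k mod p)) x" for k using funpow_mod_eq[where f = ?f and n = p and x = x and m = k] x(3) by simp
  have Pfin: "P = (\<lambda>k. (?f ^^ k) x) ` {..<p}"
  proof
    show "P \<subseteq> (\<lambda>k. (?f ^^ k) x) ` {..<p}"
    proof
      fix y assume "y \<in> P"
      then obtain k where "y = (?f ^^ k) x" using P by auto
      then have "y = (?f ^^ (k mod p)) x" using modk by simp
      moreover have "k mod p \<in> {..<p}" using x(2) by simp
      ultimately show "y \<in> (\<lambda>k. (?f ^^ k) x) ` {..<p}" by blast
    qed
  qed (auto simp: P)
  have gam: "(?f ^^ k) x \<in> gamma n" for k
    by (induction k) (auto simp: x(1) fmap_gamma m_lt_n)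
  have cl: "\<forall>y\<in>P. ?f y \<in> P" using P by (auto intro: exI[of _ "Suc _"])
  have tr: "\<forall>y\<in>P. \<forall>z\<in>P. \<exists>k. (?f ^^ k) y = z"
  proof (intro ballI)
    fix y z assume "y \<in> P" "z \<in> P"
    then obtain i j where ij: "y = (?f ^^ j) x" "z = (?f ^^ i) x" using P by auto
    have jj: "j \<le> p * j" using x(2) by (cases p) auto
    have "(?f ^^ (i + p*j - j)) y = (?f ^^ (i + p*j - j + j)) x" by (simp add: ij funpow_add)
    also have "i + p*j - j + j = i + p*j" using jj by linarith
    also have "(?f ^^ (i + p*j)) x = (?f ^^ ((i + p*j) mod p)) x" by (rule modk)
    also have "(i + p*j) mod p = i mod p" by simp
    also have "(?f ^^ (i mod p)) x = z" using modk ij by simp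
    finally show "\<exists>k. (?f ^^ k) y = z" by blast
  qed
  have noV: "Vtx \<notin> P"
  proof
    assume "Vtx \<in> P"
    then obtain k where k: "(?f ^^ k) x = Vtx" using P by (auto dest: sym)
    have vv: "(?f ^^ i) Vtx = Vtx" for i by (induction i) auto
    have "x \<in> P" using P by (auto intro: exI[of _ 0])
    then obtain i where "(?f ^^ i) Vtx = x" using tr \<open>Vtx \<in> P\<close> by blast
    then have "x = Vtx" using vv by simp
    then have "P = {Vtx}" using P vv by auto
    then show False using assms by (simp add: star_orbit_def)
  qed
  show ?thesis unfolding goodP_def
    using Pfin gam cl tr noV assms by (auto simp: star_orbit_def P)
qed

context
  fixes P assumes gp: "goodP m n P"
begin


lemma xx_len: "length (sorted_list_of_set (ptsE P r)) = card (ptsE P r)"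
  by simp


lemma xx_strict: "i < j \<Longrightarrow> j < card (ptsE P r) \<Longrightarrow> xx P r i < xx P r j"
  using gp_ptsE_fin[OF gp, of r] unfolding xx_def
  by (metis sorted_wrt_iff_nth_less strict_sorted_list_of_set xx_len)

lemma xx_mem: "s < card (ptsE P r) \<Longrightarrow> xx P r s \<in> ptsE P r"
  using gp_ptsE_fin[OF gp, of r] unfolding xx_def
  by (metis nth_mem set_sorted_list_of_set xx_len)

lemma xx_P: "s < card (ptsE P r) \<Longrightarrow> Pt r (xx P r s) \<in> P"
  using xx_mem by (simp add: ptsE_def)

lemma xx_surj: "t \<in> ptsE P r \<Longrightarrow> \<exists>s < card (ptsE P r). t = xx P r s"
  using gp_ptsE_fin[OF gp, of r] unfolding xx_def
  by (metis in_set_conv_nth set_sorted_list_of_set xx_len)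

lemma xx_idx: "s < card (ptsE P r) \<Longrightarrow> idx P (Pt r (xx P r s)) = (r, s)"
  using rank_nth[OF gp_ptsE_fin[OF gp]] by (simp add: xx_def)

lemma xx_lab: "lab P r s = Pt r (xx P r s)"
  by (simp add: lab_def xx_def)

lemma xx_0: "r < n \<Longrightarrow> xx P r 0 = tmin P r"
proof -
  assume r: "r < n"
  have "sorted_list_of_set (ptsE P r) = Min (ptsE P r) # sorted_list_of_set (ptsE P r - {Min (ptsE P r)})"
    using sorted_list_of_set_nonempty[of "ptsE P r"] gp_ptsE_fin[OF gp, of r] gp_ne[OF gp r] by simp
  then show ?thesis by (simp add: xx_def tmin_def)
qed

lemma card_pos: "r < n \<Longrightarrow> 0 < card (ptsE P r)"
  using gp_ptsE_fin[OF gp, of r] gp_ne[OF gp, of r] by (simp add: card_gt_0_iff)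

end
end

definition rhs :: "nat \<Rightarrow> nat \<Rightarrow> nat \<Rightarrow> bool \<Rightarrow> nat list \<Rightarrow> (nat \<times> nat \<Rightarrow> nat \<times> nat) \<Rightarrow> nat set \<Rightarrow> nat set \<Rightarrow> nat set \<Rightarrow> bool" where
  "rhs m n k gB N \<pi> A B C \<longleftrightarrow>
((\<forall>r. 0 < r \<and> r < n \<longrightarrow>
        (\<forall>s < N ! r. fst (\<pi> (r, s)) = (r + m) mod n) \<and>
        (\<forall>s1 s2. s1 < s2 \<and> s2 < N ! r \<longrightarrow> snd (\<pi> (r, s1)) < snd (\<pi> (r, s2))) \<and>
        snd (\<pi> (r, 0)) = 0) \<and>
     0 \<in> (if gB then B else A) \<and>
     fst (\<pi> (0, 0)) = k \<and>
     (\<forall>c\<in>C. \<pi> (0, c) = (m, 0)) \<and>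
     (\<forall>s < N ! 0. k \<le> fst (\<pi> (0, s)) \<and> fst (\<pi> (0, s)) \<le> m) \<and>
     (\<forall>s1 s2. s1 \<le> s2 \<and> s2 < N ! 0 \<longrightarrow> fst (\<pi> (0, s1)) \<le> fst (\<pi> (0, s2))) \<and>
     (\<forall>s1 s2. s1 < s2 \<and> s2 < N ! 0 \<and> fst (\<pi> (0, s1)) = fst (\<pi> (0, s2)) \<and> s1 \<in> B \<union> C
        \<longrightarrow> s2 \<in> B) \<and>
     (\<forall>s1 s2. s1 < s2 \<and> s2 < N ! 0 \<and> fst (\<pi> (0, s1)) = fst (\<pi> (0, s2)) \<and> s1 \<in> A \<and> s2 \<in> A
        \<longrightarrow> snd (\<pi> (0, s1)) > snd (\<pi> (0, s2))) \<and>
     (\<forall>s1 s2. s1 < s2 \<and> s2 < N ! 0 \<and> fst (\<pi> (0, s1)) = fst (\<pi> (0, s2)) \<and> s1 \<in> B \<and> s2 \<in> B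
        \<longrightarrow> snd (\<pi> (0, s1)) < snd (\<pi> (0, s2))))"

lemma same_half: "((a::nat)+1) div 2 = (b+1) div 2 \<Longrightarrow> even a = even b \<Longrightarrow> a = b"
  by presburger

lemma half_le_eq: "((a::nat)+1) div 2 = (b+1) div 2 \<Longrightarrow> a \<le> b \<Longrightarrow> even a \<Longrightarrow> a = b"
  by presburger
lemma half_odd_eq: "((a::nat)+1) div 2 = (b+1) div 2 \<Longrightarrow> a \<le> b \<Longrightarrow> odd b \<Longrightarrow> a = b"
  by presburger

lemma gj_mono_even: "even J \<Longrightarrow> t1 < t2 \<Longrightarrow> gj m J t1 < gj m J t2"
  by (simp add: gj_def)
lemma gj_mono_odd: "odd J \<Longrightarrow> t1 < t2 \<Longrightarrow> gj m J t1 > gj m J t2"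
  by (simp add: gj_def)

context mn begin

context
  fixes P assumes gp: "goodP m n P"
begin

lemma xx_eq: "xx P r s = sorted_list_of_set (ptsE P r) ! s"
  by (simp add: xx_def)

lemma xx_less_imp: "a < card (ptsE P r) \<Longrightarrow> b < card (ptsE P r) \<Longrightarrow> xx P r a < xx P r b \<Longrightarrow> a < b"
  using xx_strict[OF gp, of b a r] by (metis linorder_neqE_nat order_less_asym)

lemma idx_of_P: "Pt r t \<in> P \<Longrightarrow> \<exists>s < card (ptsE P r). idx P (Pt r t) = (r, s) \<and> xx P r s = t"
proof -
  assume "Pt r t \<in> P"
  then have "t \<in> ptsE P r" by (simp add: ptsE_def)
  then obtain s where "s < card (ptsE P r)" "t = xx P r s" using xx_surj[OF gp] by blast
  then show ?thesis using xx_idx[OF gp] by auto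
qed

lemma floor_mono_J: "a \<le> b \<Longrightarrow> nat \<lfloor>real (2*m+1) * a\<rfloor> \<le> nat \<lfloor>real (2*m+1) * b\<rfloor>"
  by (intro nat_mono floor_mono mult_left_mono) auto

end

lemma forward:
  assumes Ps: "Pset m n k gB P" and dP: "dataP m n P = (N, \<pi>, (A, B, C))"
    and D: "inD n (N, \<pi>, (A, B, C))" and km: "k < m"
  shows "rhs m n k gB N \<pi> A B C"
proof -
  have so: "star_orbit m n P" using Ps by (simp add: Pset_def)
  have gp: "goodP m n P" using star_good[OF so] .
  have Nr: "r < n \<Longrightarrow> N ! r = card (ptsE P r)" for r
    using dP by (auto simp: dataP_def dataN_def)
  have lenN: "length N = n" using dP by (auto simp: dataP_def dataN_def)
  have piE: "r < n \<Longrightarrow> s < N ! r \<Longrightarrow> \<pi> (r, s) = idx P (fmap m n (Pt r (xx P r s)))" for r s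
    using dP lenN by (auto simp: dataP_def dataPi_def Lset_def xx_lab[OF gp])
  have ABC: "A = {s. s < N ! 0 \<and> loc_rev m n P (xx P 0 s)}" "B = {s. s < N ! 0 \<and> loc_pres m n P (xx P 0 s)}"
    "C = {s. s < N ! 0 \<and> \<not> loc_inj m n P (xx P 0 s)}"
    using dP Nr[of 0] n_ge2 by (auto simp: dataP_def dataABC_def Let_def xx_def)
  have n0: "0 < n" using n_ge2 by simp
  have cardC: "card C = 1" using D by (simp add: inD_def)
  have posr: "\<pi> (r, s) = ((r + m) mod n, s') \<and> s' < N ! ((r+m) mod n) \<and> xx P ((r+m) mod n) s' = xx P r s"
    if "0 < r" "r < n" "s < N ! r" "s' = snd (\<pi> (r, s))" for r s s'
  proof -
    have inP: "Pt r (xx P r s) \<in> P" using xx_P[OF gp] that Nr by simp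
    have "fmap m n (Pt r (xx P r s)) = Pt ((r+m) mod n) (xx P r s)" using that by simp
    moreover have "fmap m n (Pt r (xx P r s)) \<in> P" using gp_cl[OF gp inP] .
    ultimately obtain s2 where "s2 < card (ptsE P ((r+m) mod n))"
      "idx P (Pt ((r+m) mod n) (xx P r s)) = ((r+m) mod n, s2)" "xx P ((r+m) mod n) s2 = xx P r s"
      using idx_of_P[OF gp] by metis
    then show ?thesis using piE[of r s] that Nr[of "(r+m) mod n"] n0 by auto
  qed
  have part1: "\<forall>r. 0 < r \<and> r < n \<longrightarrow>
        (\<forall>s < N ! r. fst (\<pi> (r, s)) = (r + m) mod n) \<and>
        (\<forall>s1 s2. s1 < s2 \<and> s2 < N ! r \<longrightarrow> snd (\<pi> (r, s1)) < snd (\<pi> (r, s2))) \<and>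
        snd (\<pi> (r, 0)) = 0"
  proof (intro allI impI)
    fix r assume r: "0 < r \<and> r < n"
    let ?r' = "(r+m) mod n"
    have r'n: "?r' < n" using n0 by simp
    have c1: "\<forall>s < N ! r. fst (\<pi> (r, s)) = (r + m) mod n"
    proof (intro allI impI)
      fix s assume "s < N ! r"
      then have "\<pi> (r, s) = ((r + m) mod n, snd (\<pi> (r, s)))" using posr[of r s "snd (\<pi> (r, s))"] r by blast
      then show "fst (\<pi> (r, s)) = (r + m) mod n" by (metis fst_conv)
    qed
    have c2: "\<forall>s1 s2. s1 < s2 \<and> s2 < N ! r \<longrightarrow> snd (\<pi> (r, s1)) < snd (\<pi> (r, s2))"
    proof (intro allI impI)
      fix s1 s2 assume s: "s1 < s2 \<and> s2 < N ! r"
      note a = posr[of r s1 "snd (\<pi> (r, s1))"] posr[of r s2 "snd (\<pi> (r, s2))"]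
      have "xx P r s1 < xx P r s2" using xx_strict[OF gp] s Nr r by simp
      then show "snd (\<pi> (r, s1)) < snd (\<pi> (r, s2))"
        using a s r xx_less_imp[OF gp] Nr[OF r'n] by auto
    qed
    have "0 < N ! r" using Nr card_pos[OF gp] r by simp
    then have a: "xx P ?r' (snd (\<pi> (r, 0))) = xx P r 0" "snd (\<pi> (r, 0)) < N ! ?r'"
      using posr[of r 0 "snd (\<pi> (r, 0))"] r by auto
    have "xx P r 0 = tmin P r" "xx P ?r' 0 = tmin P ?r'" using xx_0[OF gp] r r'n by auto
    have "fmap m n (Pt r (tmin P r)) = Pt ?r' (tmin P ?r')" using gp_star[OF gp] r by simp
    then have "tmin P r = tmin P ?r'" using r by simp
    then have "xx P ?r' (snd (\<pi> (r, 0))) = xx P ?r' 0" using a \<open>xx P r 0 = tmin P r\<close> \<open>xx P ?r' 0 = tmin P ?r'\<close> by simp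
    moreover have "0 < N ! ?r'" using Nr card_pos[OF gp] r'n by simp
    ultimately have c3: "snd (\<pi> (r, 0)) = 0"
      using xx_strict[OF gp, of 0 "snd (\<pi> (r, 0))" ?r'] a(2) Nr[OF r'n] by (metis gr0I order_less_irrefl)
    show "(\<forall>s < N ! r. fst (\<pi> (r, s)) = (r + m) mod n) \<and>
        (\<forall>s1 s2. s1 < s2 \<and> s2 < N ! r \<longrightarrow> snd (\<pi> (r, s1)) < snd (\<pi> (r, s2))) \<and>
        snd (\<pi> (r, 0)) = 0" using c1 c2 c3 by blast
  qed
  define J where "J s = nat \<lfloor>real (2*m+1) * xx P 0 s\<rfloor>" for s
  define tg where "tg s = (J s + 1) div 2" for s
  define u where "u s = gj m (J s) (xx P 0 s)" for s
  have in0: "s < N ! 0 \<Longrightarrow> Pt 0 (xx P 0 s) \<in> P" for s using xx_P[OF gp] Nr n0 by simp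
  have f0: "s < N ! 0 \<Longrightarrow> fmap m n (Pt 0 (xx P 0 s)) = Pt (tg s) (u s) \<and> J s \<le> 2*m" for s
    using gp_f0[OF gp in0] by (simp add: J_def tg_def u_def)
  have tgm: "s < N ! 0 \<Longrightarrow> tg s \<le> m" for s
  proof -
    assume s: "s < N ! 0"
    have "J s \<le> 2*m" using f0[OF s] by blast
    then have "(J s + 1) div 2 \<le> (2*m+1) div 2" by (intro div_le_mono) simp
    then show ?thesis by (simp add: tg_def)
  qed
  have pi0: "s < N ! 0 \<Longrightarrow> fst (\<pi> (0, s)) = tg s \<and> snd (\<pi> (0,s)) < N ! tg s \<and> xx P (tg s) (snd (\<pi> (0, s))) = u s" for s
  proof -
    assume s: "s < N ! 0"
    have "Pt (tg s) (u s) \<in> P" using gp_cl[OF gp in0[OF s]] f0[OF s] by simp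
    then obtain s2 where "s2 < card (ptsE P (tg s))" "idx P (Pt (tg s) (u s)) = (tg s, s2)" "xx P (tg s) s2 = u s"
      using idx_of_P[OF gp] by metis
    moreover have "tg s < n" using tgm[OF s] m_lt_n by simp
    ultimately show ?thesis using piE[of 0 s] f0[OF s] s n0 Nr by auto
  qed
  have Jmono: "s1 \<le> s2 \<Longrightarrow> s2 < N ! 0 \<Longrightarrow> J s1 \<le> J s2" for s1 s2
  proof -
    assume a: "s1 \<le> s2" "s2 < N ! 0"
    have "xx P 0 s1 \<le> xx P 0 s2" using a xx_strict[OF gp, of s1 s2 0] Nr n0 by (cases "s1 = s2") auto
    then show ?thesis unfolding J_def by (intro nat_mono floor_mono mult_left_mono) auto
  qed
  have ugeq: "s < N ! 0 \<Longrightarrow> tmin P (tg s) \<le> u s" for s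
  proof -
    assume s: "s < N ! 0"
    have "Pt (tg s) (u s) \<in> P" using gp_cl[OF gp in0[OF s]] f0[OF s] by simp
    then show ?thesis using gp_tmin[OF gp, of "tg s"] tgm[OF s] m_lt_n by (simp add: ptsE_def)
  qed
  have tyy: "(tmin P (tg s) < u s \<and> even (J s) \<and> s \<in> B \<and> s \<notin> A \<and> s \<notin> C) \<or>
             (tmin P (tg s) < u s \<and> odd (J s) \<and> s \<in> A \<and> s \<notin> B \<and> s \<notin> C) \<or>
             (u s = tmin P (tg s) \<and> tg s = m \<and> \<pi> (0, s) = (m, 0) \<and> s \<in> C \<and> s \<notin> A \<and> s \<notin> B \<and> 0 < s)"
    if s: "s < N ! 0" for s
  proof (cases "tmin P (tg s) < u s")
    case True
    note ab = gp_AB[OF gp in0[OF s] J_def[of s], folded tg_def u_def, OF True]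
    show ?thesis using ab ABC s True by (cases "even (J s)") auto
  next
    case False
    then have eq: "u s = tmin P (tg s)" using ugeq[OF s] by simp
    have tm: "tg s = m" using gp_C3[OF gp in0[OF s] J_def[of s]] eq by (simp add: tg_def u_def)
    have p: "\<pi> (0, s) = (m, 0)"
    proof -
      have "xx P m (snd (\<pi> (0, s))) = xx P m 0" using pi0[OF s] eq tm xx_0[OF gp] m_lt_n by simp
      moreover have "0 < N ! m" using Nr card_pos[OF gp] m_lt_n by simp
      ultimately have "snd (\<pi> (0, s)) = 0" using xx_strict[OF gp, of 0 "snd (\<pi> (0, s))" m] pi0[OF s] tm Nr m_lt_n
        by (metis gr0I order_less_irrefl)
      then show ?thesis using pi0[OF s] tm by (simp add: prod_eq_iff)
    qed
    have s0: "0 < s"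
    proof (rule gr0I)
      assume "s = 0"
      then have "fst (\<pi> (0, 0)) = m" using p by simp
      moreover obtain t where "fmap m n (lab P 0 0) = Pt k t" using Ps by (auto simp: Pset_def)
      then have "tg 0 = k" using f0[of 0] xx_lab[OF gp] Nr card_pos[OF gp] n0 by auto
      then have "fst (\<pi> (0, 0)) = k" using pi0[of 0] \<open>s = 0\<close> s by simp
      ultimately show False using km by simp
    qed
    have lt: "tmin P 0 < xx P 0 s" using xx_strict[OF gp, of 0 s 0] s0 s Nr n0 xx_0[OF gp n0] by simp
    note cn = gp_Cn[OF gp in0[OF s] J_def[of s], folded tg_def u_def, OF eq lt]
    show ?thesis using cn ABC s eq tm p s0 by auto
  qed
  have k0: "fst (\<pi> (0, 0)) = k"
  proof -
    obtain t where "fmap m n (lab P 0 0) = Pt k t" using Ps by (auto simp: Pset_def)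
    moreover have "0 < N ! 0" using Nr card_pos[OF gp] n0 by simp
    ultimately show ?thesis using f0[of 0] pi0[of 0] xx_lab[OF gp] by auto
  qed
  have N0: "0 < N ! 0" using Nr card_pos[OF gp] n0 by simp
  have tgmono: "s1 \<le> s2 \<Longrightarrow> s2 < N ! 0 \<Longrightarrow> tg s1 \<le> tg s2" for s1 s2
    using Jmono by (simp add: tg_def div_le_mono)
  have xlt: "s1 < s2 \<Longrightarrow> s2 < N ! 0 \<Longrightarrow> xx P 0 s1 < xx P 0 s2" for s1 s2
    using xx_strict[OF gp, of s1 s2 0] Nr n0 by simp
  have gam: "0 \<in> (if gB then B else A)"
    using Ps dP by (auto simp: Pset_def dataP_def)
  have item4: "\<forall>c\<in>C. \<pi> (0, c) = (m, 0)"
  proof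
    fix c assume c: "c \<in> C"
    then have "c < N ! 0" using ABC by auto
    then show "\<pi> (0, c) = (m, 0)" using tyy[of c] c by auto
  qed
  have item5: "\<forall>s < N ! 0. k \<le> fst (\<pi> (0, s)) \<and> fst (\<pi> (0, s)) \<le> m"
    using pi0 tgm tgmono[of 0] k0 N0 pi0[of 0] by auto
  have item6: "\<forall>s1 s2. s1 \<le> s2 \<and> s2 < N ! 0 \<longrightarrow> fst (\<pi> (0, s1)) \<le> fst (\<pi> (0, s2))"
    using pi0 tgmono by auto
  have sameJ: "J s1 = J s2" if "s1 < s2" "s2 < N ! 0" "tg s1 = tg s2" "odd (J s1) = odd (J s2)" for s1 s2
    using that same_half[of "J s1" "J s2"] by (simp add: tg_def)
  have item7: "\<forall>s1 s2. s1 < s2 \<and> s2 < N ! 0 \<and> fst (\<pi> (0, s1)) = fst (\<pi> (0, s2)) \<and> s1 \<in> B \<union> C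
        \<longrightarrow> s2 \<in> B"
  proof (intro allI impI)
    fix s1 s2 assume a: "s1 < s2 \<and> s2 < N ! 0 \<and> fst (\<pi> (0, s1)) = fst (\<pi> (0, s2)) \<and> s1 \<in> B \<union> C"
    then have s1N: "s1 < N ! 0" by simp
    have tgeq: "tg s1 = tg s2" using a pi0[of s1] pi0[of s2] by simp
    have Jle: "J s1 \<le> J s2" using Jmono a by simp
    have xl: "xx P 0 s1 < xx P 0 s2" using xlt a by simp
    show "s2 \<in> B"
    proof (rule ccontr)
      assume nB: "s2 \<notin> B"
      consider (b) "tmin P (tg s1) < u s1 \<and> even (J s1) \<and> s1 \<in> B" | (c) "u s1 = tmin P (tg s1) \<and> tg s1 = m \<and> s1 \<in> C"
        using tyy[OF s1N] a by auto
      then show False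
      proof cases
        case b
        consider (A) "tmin P (tg s2) < u s2 \<and> odd (J s2)" | (C) "u s2 = tmin P (tg s2) \<and> s2 \<in> C"
          using tyy[of s2] a nB by auto
        then show False
        proof cases
          case A
          have "J s1 = J s2" using half_le_eq[of "J s1" "J s2"] Jle b tgeq by (simp add: tg_def)
          then show False using A b by simp
        next
          case C
          have "J s1 = J s2" using half_le_eq[of "J s1" "J s2"] Jle b tgeq by (simp add: tg_def)
          then have "u s1 < u s2" using b xl gj_mono_even by (simp add: u_def)
          then show False using C b tgeq by simp
        qed
      next
        case c
        consider (A) "tmin P (tg s2) < u s2 \<and> odd (J s2)" | (C) "s2 \<in> C"
          using tyy[of s2] a nB by auto
        then show False
        proof cases
          case A
          have "J s1 = J s2" using half_odd_eq[of "J s1" "J s2"] Jle A tgeq by (simp add: tg_def)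
          then have "u s1 > u s2" using A xl gj_mono_odd by (simp add: u_def)
          then show False using c A tgeq by simp
        next
          case C
          have "s1 = s2" using cardC C c by (metis card_1_singletonE singletonD)
          then show False using a by simp
        qed
      qed
    qed
  qed
  have item8: "\<forall>s1 s2. s1 < s2 \<and> s2 < N ! 0 \<and> fst (\<pi> (0, s1)) = fst (\<pi> (0, s2)) \<and> s1 \<in> A \<and> s2 \<in> A
        \<longrightarrow> snd (\<pi> (0, s1)) > snd (\<pi> (0, s2))"
  proof (intro allI impI)
    fix s1 s2 assume a: "s1 < s2 \<and> s2 < N ! 0 \<and> fst (\<pi> (0, s1)) = fst (\<pi> (0, s2)) \<and> s1 \<in> A \<and> s2 \<in> A"
    then have s1N: "s1 < N ! 0" by simp
    have tgeq: "tg s1 = tg s2" using a pi0[of s1] pi0[of s2] by simp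
    have o1: "odd (J s1)" "odd (J s2)" using tyy[OF s1N] tyy[of s2] a by auto
    have "J s1 = J s2" using sameJ[of s1 s2] a tgeq o1 by simp
    then have "u s1 > u s2" using o1 xlt[of s1 s2] a gj_mono_odd by (simp add: u_def)
    then have "xx P (tg s1) (snd (\<pi> (0, s2))) < xx P (tg s1) (snd (\<pi> (0, s1)))"
      using pi0[OF s1N] pi0[of s2] a tgeq by simp
    moreover have "snd (\<pi> (0, s2)) < card (ptsE P (tg s1))" "snd (\<pi> (0, s1)) < card (ptsE P (tg s1))"
      using pi0[OF s1N] pi0[of s2] a tgeq Nr tgm[OF s1N] m_lt_n by auto
    ultimately show "snd (\<pi> (0, s1)) > snd (\<pi> (0, s2))"
      using xx_less_imp[OF gp, of "snd (\<pi> (0, s2))" "tg s1" "snd (\<pi> (0, s1))"] by simp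
  qed
  have item9: "\<forall>s1 s2. s1 < s2 \<and> s2 < N ! 0 \<and> fst (\<pi> (0, s1)) = fst (\<pi> (0, s2)) \<and> s1 \<in> B \<and> s2 \<in> B
        \<longrightarrow> snd (\<pi> (0, s1)) < snd (\<pi> (0, s2))"
  proof (intro allI impI)
    fix s1 s2 assume a: "s1 < s2 \<and> s2 < N ! 0 \<and> fst (\<pi> (0, s1)) = fst (\<pi> (0, s2)) \<and> s1 \<in> B \<and> s2 \<in> B"
    then have s1N: "s1 < N ! 0" by simp
    have tgeq: "tg s1 = tg s2" using a pi0[of s1] pi0[of s2] by simp
    have o1: "even (J s1)" "even (J s2)" using tyy[OF s1N] tyy[of s2] a by auto
    have "J s1 = J s2" using sameJ[of s1 s2] a tgeq o1 by simp
    then have "u s1 < u s2" using o1 xlt[of s1 s2] a gj_mono_even by (simp add: u_def)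
    then have "xx P (tg s1) (snd (\<pi> (0, s1))) < xx P (tg s1) (snd (\<pi> (0, s2)))"
      using pi0[OF s1N] pi0[of s2] a tgeq by simp
    moreover have "snd (\<pi> (0, s2)) < card (ptsE P (tg s1))" "snd (\<pi> (0, s1)) < card (ptsE P (tg s1))"
      using pi0[OF s1N] pi0[of s2] a tgeq Nr tgm[OF s1N] m_lt_n by auto
    ultimately show "snd (\<pi> (0, s1)) < snd (\<pi> (0, s2))"
      using xx_less_imp[OF gp, of "snd (\<pi> (0, s1))" "tg s1" "snd (\<pi> (0, s2))"] by simp
  qed
  show ?thesis unfolding rhs_def
    using part1 gam k0 item4 item5 item6 item7 item8 item9 by blast
qed

end

definition pinv :: "nat \<Rightarrow> nat \<Rightarrow> real \<Rightarrow> real" where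
  "pinv m J y = (if even J then (y + real J) / real (2*m+1) else (real J + 1 - y) / real (2*m+1))"

lemma gj_pinv: "gj m J (pinv m J y) = y"
  by (simp add: gj_def pinv_def)

lemma pinv_range:
  assumes "0 \<le> y" "y \<le> 1"
  shows "real J / real (2*m+1) \<le> pinv m J y" "pinv m J y \<le> (real J + 1) / real (2*m+1)"
  using assms by (auto simp: pinv_def divide_right_mono)

lemma pinv_mono_even: "even J \<Longrightarrow> y1 \<le> y2 \<Longrightarrow> pinv m J y1 \<le> pinv m J y2"
  by (simp add: pinv_def divide_right_mono)
lemma pinv_mono_odd: "odd J \<Longrightarrow> y1 \<le> y2 \<Longrightarrow> pinv m J y2 \<le> pinv m J y1"
  by (simp add: pinv_def divide_right_mono)

lemma fmap_break:
  assumes "real (2*m+1) * t = real J" "0 \<le> t" "t < 1" "J \<noteq> 0"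
  shows "fmap m n (Pt 0 t) = (if odd J then Vtx else Pt (J div 2) 0)"
proof -
  have "nat \<lfloor>real (2*m+1) * t\<rfloor> = J" using assms(1) by simp
  then show ?thesis using assms by (auto simp: Let_def mkpt_def)
qed

lemma half_lt_le: "((a::nat)+1) div 2 < (b+1) div 2 \<Longrightarrow> a \<le> b"
proof (rule ccontr)
  assume "(a+1) div 2 < (b+1) div 2" "\<not> a \<le> b"
  moreover have "(b+1) div 2 \<le> (a+1) div 2" using \<open>\<not> a \<le> b\<close> by (intro div_le_mono) simp
  ultimately show False by simp
qed

lemma half_eq_gt: "((a::nat)+1) div 2 = (b+1) div 2 \<Longrightarrow> b < a \<Longrightarrow> even a \<and> odd b"
  by presburger

locale bw = mn +
  fixes k :: nat and gB :: bool and N :: "nat list" and \<pi> :: "nat \<times> nat \<Rightarrow> nat \<times> nat"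
    and A B C :: "nat set" and c :: nat
  assumes D: "inD n (N, \<pi>, (A, B, C))" and R: "rhs m n k gB N \<pi> A B C"
    and km: "k < m" and k0: "k = 0 \<longrightarrow> gB" and cC: "C = {c}"
begin

abbreviation "Ls \<equiv> Lset N"

lemma lenN: "length N = n" using D by (simp add: inD_def)
lemma Npos: "r < n \<Longrightarrow> 0 < N ! r" using D by (simp add: inD_def)
lemma perm: "\<pi> permutes Ls" using D by (simp add: inD_def)
lemma tr: "x \<in> Ls \<Longrightarrow> y \<in> Ls \<Longrightarrow> \<exists>k. (\<pi> ^^ k) x = y" using D by (simp add: inD_def)
lemma part: "A \<union> B \<union> C = {..<N ! 0}" "A \<inter> B = {}" "A \<inter> C = {}" "B \<inter> C = {}"
  using D by (simp_all add: inD_def)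
lemma cardC: "card C = 1" using D by (simp add: inD_def)

lemma Ls_iff: "(r, s) \<in> Ls \<longleftrightarrow> r < n \<and> s < N ! r"
  by (simp add: Lset_def lenN)

lemma pi_in: "x \<in> Ls \<Longrightarrow> \<pi> x \<in> Ls" using permutes_in_image[OF perm] by simp
lemma pi_inj: "inj \<pi>" using permutes_inj[OF perm] .
lemma pi_out: "x \<notin> Ls \<Longrightarrow> \<pi> x = x" using permutes_not_in[OF perm] .

lemma pi_in': "r < n \<Longrightarrow> s < N ! r \<Longrightarrow> fst (\<pi> (r, s)) < n \<and> snd (\<pi> (r, s)) < N ! fst (\<pi> (r, s))"
  using pi_in[of "(r, s)"] Ls_iff by (metis prod.collapse)

lemma funpow_in_Ls: "x \<in> Ls \<Longrightarrow> (\<pi> ^^ i) x \<in> Ls"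
  by (induction i) (auto simp: pi_in)

lemmas RR = R[unfolded rhs_def]
lemmas Rp1 = RR[THEN conjunct1]
lemmas Rp2 = RR[THEN conjunct2, THEN conjunct1]
lemmas Rp3 = RR[THEN conjunct2, THEN conjunct2, THEN conjunct1]
lemmas Rp4 = RR[THEN conjunct2, THEN conjunct2, THEN conjunct2, THEN conjunct1]
lemmas Rp5 = RR[THEN conjunct2, THEN conjunct2, THEN conjunct2, THEN conjunct2, THEN conjunct1]
lemmas Rp6 = RR[THEN conjunct2, THEN conjunct2, THEN conjunct2, THEN conjunct2, THEN conjunct2, THEN conjunct1]
lemmas Rp7 = RR[THEN conjunct2, THEN conjunct2, THEN conjunct2, THEN conjunct2, THEN conjunct2, THEN conjunct2, THEN conjunct1]
lemmas Rp8 = RR[THEN conjunct2, THEN conjunct2, THEN conjunct2, THEN conjunct2, THEN conjunct2, THEN conjunct2, THEN conjunct2, THEN conjunct1]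
lemmas Rp9 = RR[THEN conjunct2, THEN conjunct2, THEN conjunct2, THEN conjunct2, THEN conjunct2, THEN conjunct2, THEN conjunct2, THEN conjunct2]

lemma R1: "0 < r \<Longrightarrow> r < n \<Longrightarrow> s < N ! r \<Longrightarrow> fst (\<pi> (r, s)) = (r + m) mod n"
  using Rp1 by blast
lemma R2: "0 < r \<Longrightarrow> r < n \<Longrightarrow> s1 < s2 \<Longrightarrow> s2 < N ! r \<Longrightarrow> snd (\<pi> (r, s1)) < snd (\<pi> (r, s2))"
  using Rp1 by blast
lemma R3: "0 < r \<Longrightarrow> r < n \<Longrightarrow> snd (\<pi> (r, 0)) = 0"
  using Rp1 by blast
lemma R4: "0 \<in> (if gB then B else A)"
  using Rp2 by blast
lemma R5: "fst (\<pi> (0, 0)) = k"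
  using Rp3 by blast
lemma R6: "c \<in> C \<Longrightarrow> \<pi> (0, c) = (m, 0)"
  using Rp4 by blast
lemma R7: "s < N ! 0 \<Longrightarrow> k \<le> fst (\<pi> (0, s)) \<and> fst (\<pi> (0, s)) \<le> m"
  using Rp5 by blast
lemma R8: "s1 \<le> s2 \<Longrightarrow> s2 < N ! 0 \<Longrightarrow> fst (\<pi> (0, s1)) \<le> fst (\<pi> (0, s2))"
  using Rp6 by blast
lemma R9: "s1 < s2 \<Longrightarrow> s2 < N ! 0 \<Longrightarrow> fst (\<pi> (0, s1)) = fst (\<pi> (0, s2)) \<Longrightarrow> s1 \<in> B \<union> C \<Longrightarrow> s2 \<in> B"
  using Rp7 by blast
lemma R10: "s1 < s2 \<Longrightarrow> s2 < N ! 0 \<Longrightarrow> fst (\<pi> (0, s1)) = fst (\<pi> (0, s2)) \<Longrightarrow> s1 \<in> A \<Longrightarrow> s2 \<in> A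
   \<Longrightarrow> snd (\<pi> (0, s1)) > snd (\<pi> (0, s2))"
  using Rp8 by blast
lemma R11: "s1 < s2 \<Longrightarrow> s2 < N ! 0 \<Longrightarrow> fst (\<pi> (0, s1)) = fst (\<pi> (0, s2)) \<Longrightarrow> s1 \<in> B \<Longrightarrow> s2 \<in> B
   \<Longrightarrow> snd (\<pi> (0, s1)) < snd (\<pi> (0, s2))"
  using Rp9 by blast

lemma cN: "c < N ! 0"
proof -
  have "c \<in> A \<union> B \<union> C" using cC by simp
  then show ?thesis using part(1) by (simp only: lessThan_iff)
qed
lemma pic: "\<pi> (0, c) = (m, 0)" using R6 cC by simp
lemma c0: "c \<noteq> 0"
proof
  assume "c = 0"
  then have "fst (\<pi> (0, 0)) = m" using pic by simp
  then show False using R5 km by simp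
qed
lemma n0: "0 < n" using n_ge2 by simp
lemma N0: "0 < N ! 0" using Npos n0 .

lemma ABC_cases: "s < N ! 0 \<Longrightarrow> (s \<in> A \<and> s \<notin> B \<and> s \<noteq> c) \<or> (s \<in> B \<and> s \<notin> A \<and> s \<noteq> c) \<or> (s = c \<and> s \<notin> A \<and> s \<notin> B)"
  using part cC by auto

lemma A_pos: "s \<in> A \<Longrightarrow> 0 < fst (\<pi> (0, s))"
proof (rule ccontr)
  assume a: "s \<in> A" "\<not> 0 < fst (\<pi> (0, s))"
  have sN: "s < N ! 0" using a part(1) by auto
  have "k = 0" using R7[OF sN] a by simp
  then have "0 \<in> B" using R4 k0 by simp
  show False
  proof (cases "s = 0")
    case True then show ?thesis using \<open>0 \<in> B\<close> a part(2) by auto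
  next
    case False
    have "fst (\<pi> (0, 0)) = fst (\<pi> (0, s))" using a R5 \<open>k = 0\<close> by simp
    then have "s \<in> B" using R9[of 0 s] False sN \<open>0 \<in> B\<close> by simp
    then show False using a part(2) by auto
  qed
qed

definition eps where "eps = (if odd c then 2*m else 2*m - 1)"

definition pc :: "nat \<Rightarrow> nat" where
  "pc s = (if s = c then eps else if s \<in> B then 2 * fst (\<pi> (0, s)) else 2 * fst (\<pi> (0, s)) - 1)"

lemma pc_tg: "s < N ! 0 \<Longrightarrow> (pc s + 1) div 2 = fst (\<pi> (0, s))"
proof -
  assume s: "s < N ! 0"
  consider (a) "s \<in> A \<and> s \<notin> B \<and> s \<noteq> c" | (b) "s \<in> B \<and> s \<notin> A \<and> s \<noteq> c" | (c) "s = c"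
    using ABC_cases[OF s] by blast
  then show ?thesis
  proof cases
    case a then show ?thesis using A_pos[of s] by (simp add: pc_def)
  next
    case b then show ?thesis by (simp add: pc_def)
  next
    case c then show ?thesis using pic m_pos by (simp add: pc_def eps_def)
  qed
qed

lemma pc_le: "s < N ! 0 \<Longrightarrow> pc s \<le> 2*m"
proof -
  assume s: "s < N ! 0"
  have "fst (\<pi> (0, s)) \<le> m" using R7[OF s] by simp
  then show ?thesis by (auto simp: pc_def eps_def)
qed

lemma pc_parity: "s < N ! 0 \<Longrightarrow> s \<noteq> c \<Longrightarrow> even (pc s) \<longleftrightarrow> s \<in> B"
  using A_pos ABC_cases by (auto simp: pc_def)

lemma pc_eps: "pc c = eps" by (simp add: pc_def)

lemma pc_0: "pc 0 + 1 < 2*m + 1"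
proof -
  have "pc 0 \<le> 2 * k" using c0 R5 by (auto simp: pc_def)
  then show ?thesis using km by simp
qed

lemma pc_mono: "s1 \<le> s2 \<Longrightarrow> s2 < N ! 0 \<Longrightarrow> pc s1 \<le> pc s2"
proof -
  assume a: "s1 \<le> s2" "s2 < N ! 0"
  show "pc s1 \<le> pc s2"
  proof (cases "s1 = s2")
    case True then show ?thesis by simp
  next
    case False
    then have lt: "s1 < s2" using a by simp
    have s1N: "s1 < N ! 0" using a by simp
    have tg: "(pc s1 + 1) div 2 \<le> (pc s2 + 1) div 2" using pc_tg[OF s1N] pc_tg[OF a(2)] R8 a by simp
    show ?thesis
    proof (cases "fst (\<pi> (0, s1)) = fst (\<pi> (0, s2))")
      case False
      then have "(pc s1 + 1) div 2 < (pc s2 + 1) div 2" using tg pc_tg[OF s1N] pc_tg[OF a(2)] by simp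
      then show ?thesis by (rule half_lt_le)
    next
      case eq: True
      show ?thesis
      proof (rule ccontr)
        assume "\<not> pc s1 \<le> pc s2"
        then have gt: "pc s2 < pc s1" by simp
        have "(pc s1 + 1) div 2 = (pc s2 + 1) div 2" using pc_tg[OF s1N] pc_tg[OF a(2)] eq by simp
        then have ev: "even (pc s1)" "odd (pc s2)" using gt half_eq_gt by blast+
        have "s1 \<in> B \<union> C"
        proof (cases "s1 = c")
          case True then show ?thesis using cC by simp
        next
          case False then show ?thesis using pc_parity[OF s1N] ev by simp
        qed
        then have s2B: "s2 \<in> B" using R9[OF lt a(2) eq] by simp
        have "s2 \<noteq> c" using s2B cC part(4) by auto
        then show False using pc_parity[OF a(2)] s2B ev by simp
      qed
    qed
  qed
qed

end

lemma pinv_diff: "\<bar>pinv m J a - pinv m J b\<bar> = \<bar>a - b\<bar> / real (2*m+1)"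
proof -
  have "pinv m J a - pinv m J b = (if even J then a - b else b - a) / real (2*m+1)"
    by (cases "even J") (simp_all add: pinv_def diff_divide_distrib[symmetric])
  then show ?thesis by (simp add: abs_minus_commute)
qed

context bw begin

definition hh :: "nat \<times> nat \<Rightarrow> real \<Rightarrow> real" where
  "hh l y = (if fst l = 0 then pinv m (pc (snd l)) y else y)"

definition Tm :: "(nat \<times> nat \<Rightarrow> real) \<Rightarrow> (nat \<times> nat \<Rightarrow> real)" where
  "Tm x = (\<lambda>l. if l \<in> Ls then hh l (x (\<pi> l)) else 0)"

definition XX :: "(nat \<times> nat \<Rightarrow> real) \<Rightarrow> bool" where
  "XX x \<longleftrightarrow> (\<forall>l\<in>Ls. 0 \<le> x l \<and> x l \<le> 1) \<and>
     (\<forall>r s1 s2. r < n \<and> s1 \<le> s2 \<and> s2 < N ! r \<longrightarrow> x (r, s1) \<le> x (r, s2)) \<and>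
     (\<forall>s < N ! 0. real (pc s) / real (2*m+1) \<le> x (0, s) \<and> x (0, s) \<le> (real (pc s) + 1) / real (2*m+1))"

lemma XX_a: "XX x \<Longrightarrow> l \<in> Ls \<Longrightarrow> 0 \<le> x l \<and> x l \<le> 1" by (simp add: XX_def)
lemma XX_b: "XX x \<Longrightarrow> r < n \<Longrightarrow> s1 \<le> s2 \<Longrightarrow> s2 < N ! r \<Longrightarrow> x (r, s1) \<le> x (r, s2)" by (simp add: XX_def)
lemma XX_c: "XX x \<Longrightarrow> s < N ! 0 \<Longrightarrow> real (pc s) / real (2*m+1) \<le> x (0, s) \<and> x (0, s) \<le> (real (pc s) + 1) / real (2*m+1)"
  by (simp add: XX_def)

lemma pcM1: "s < N ! 0 \<Longrightarrow> (real (pc s) + 1) / real (2*m+1) \<le> 1"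
  using pc_le[of s] by (simp add: field_simps)

lemma Tm_in: "l \<in> Ls \<Longrightarrow> Tm x l = hh l (x (\<pi> l))" by (simp add: Tm_def)

lemma Tm0: "s < N ! 0 \<Longrightarrow> Tm x (0, s) = pinv m (pc s) (x (\<pi> (0, s)))"
  using Ls_iff n0 by (simp add: Tm_def hh_def)

lemma Tmr: "0 < r \<Longrightarrow> r < n \<Longrightarrow> s < N ! r \<Longrightarrow> Tm x (r, s) = x (\<pi> (r, s))"
  using Ls_iff by (simp add: Tm_def hh_def)

lemma Tx0_mono:
  assumes X: "XX x" and s: "s1 < s2" "s2 < N ! 0"
  shows "Tm x (0, s1) \<le> Tm x (0, s2)"
proof -
  have s1N: "s1 < N ! 0" using s by simp
  define y1 where "y1 = x (\<pi> (0, s1))"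
  define y2 where "y2 = x (\<pi> (0, s2))"
  have T1: "Tm x (0, s1) = pinv m (pc s1) y1" using Tm0[OF s1N] by (simp add: y1_def)
  have T2: "Tm x (0, s2) = pinv m (pc s2) y2" using Tm0[OF s(2)] by (simp add: y2_def)
  have y1r: "0 \<le> y1" "y1 \<le> 1" using XX_a[OF X pi_in[of "(0, s1)"]] Ls_iff s1N n0 by (simp_all add: y1_def)
  have y2r: "0 \<le> y2" "y2 \<le> 1" using XX_a[OF X pi_in[of "(0, s2)"]] Ls_iff s n0 by (simp_all add: y2_def)
  have Jle: "pc s1 \<le> pc s2" using pc_mono s by simp
  show ?thesis
  proof (cases "pc s1 < pc s2")
    case True
    have "Tm x (0, s1) \<le> (real (pc s1) + 1) / real (2*m+1)" using T1 pinv_range[OF y1r] by simp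
    also have "\<dots> \<le> real (pc s2) / real (2*m+1)" using True by (simp add: divide_right_mono)
    also have "\<dots> \<le> Tm x (0, s2)" using T2 pinv_range[OF y2r] by simp
    finally show ?thesis .
  next
    case False
    then have JJ: "pc s1 = pc s2" using Jle by simp
    have fsteq: "fst (\<pi> (0, s1)) = fst (\<pi> (0, s2))" using pc_tg[OF s1N] pc_tg[OF s(2)] JJ by simp
    define j where "j = fst (\<pi> (0, s1))"
    have jn: "j < n" using pi_in'[OF n0 s1N] by (simp add: j_def)
    have p1: "\<pi> (0, s1) = (j, snd (\<pi> (0, s1)))" "snd (\<pi> (0, s1)) < N ! j"
      using pi_in'[OF n0 s1N] by (simp_all add: j_def)
    have p2: "\<pi> (0, s2) = (j, snd (\<pi> (0, s2)))" "snd (\<pi> (0, s2)) < N ! j"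
      using pi_in'[OF n0 s(2)] fsteq by (simp_all add: j_def)
    have inc: "y1 \<le> y2" if "snd (\<pi> (0, s1)) \<le> snd (\<pi> (0, s2))"
    proof -
      have "x (j, snd (\<pi> (0, s1))) \<le> x (j, snd (\<pi> (0, s2)))" using XX_b[OF X jn that p2(2)] .
      then show ?thesis using p1 p2 by (simp add: y1_def y2_def)
    qed
    have dec: "y2 \<le> y1" if "snd (\<pi> (0, s2)) \<le> snd (\<pi> (0, s1))"
    proof -
      have "x (j, snd (\<pi> (0, s2))) \<le> x (j, snd (\<pi> (0, s1)))" using XX_b[OF X jn that p1(2)] .
      then show ?thesis using p1 p2 by (simp add: y1_def y2_def)
    qed
    consider (a1) "s1 \<in> A \<and> s1 \<notin> B \<and> s1 \<noteq> c" | (b1) "s1 \<in> B \<and> s1 \<notin> A \<and> s1 \<noteq> c" | (c1) "s1 = c"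
      using ABC_cases[OF s1N] by blast
    then show ?thesis
    proof cases
      case a1
      consider (a2) "s2 \<in> A \<and> s2 \<notin> B \<and> s2 \<noteq> c" | (b2) "s2 \<in> B \<and> s2 \<notin> A \<and> s2 \<noteq> c" | (c2) "s2 = c"
        using ABC_cases[OF s(2)] by blast
      then show ?thesis
      proof cases
        case a2
        have od: "odd (pc s1)" using pc_parity[OF s1N] a1 by simp
        have "snd (\<pi> (0, s1)) > snd (\<pi> (0, s2))" using R10[OF s fsteq] a1 a2 by simp
        then have "y2 \<le> y1" using dec by simp
        then show ?thesis using T1 T2 JJ pinv_mono_odd[OF od] by simp
      next
        case b2
        then show ?thesis using pc_parity[OF s1N] pc_parity[OF s(2)] a1 JJ by simp
      next
        case c2
        have od: "odd (pc s1)" using pc_parity[OF s1N] a1 by simp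
        have "\<pi> (0, s2) = (m, 0)" using c2 pic by simp
        then have "snd (\<pi> (0, s2)) \<le> snd (\<pi> (0, s1))" by simp
        then have "y2 \<le> y1" using dec by simp
        then show ?thesis using T1 T2 JJ pinv_mono_odd[OF od] by simp
      qed
    next
      case b1
      have s2B: "s2 \<in> B" using R9[OF s fsteq] b1 by simp
      then have s2c: "s2 \<noteq> c" using cC part(4) by auto
      have ev: "even (pc s1)" using pc_parity[OF s1N] b1 by simp
      have "snd (\<pi> (0, s1)) < snd (\<pi> (0, s2))" using R11[OF s fsteq] b1 s2B by simp
      then have "y1 \<le> y2" using inc by simp
      then show ?thesis using T1 T2 JJ pinv_mono_even[OF ev] by simp
    next
      case c1
      have s2B: "s2 \<in> B" using R9[OF s fsteq] c1 cC by simp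
      then have s2c: "s2 \<noteq> c" using cC part(4) by auto
      have ev: "even (pc s2)" using pc_parity[OF s(2) s2c] s2B by simp
      have "\<pi> (0, s1) = (m, 0)" using c1 pic by simp
      then have "snd (\<pi> (0, s1)) \<le> snd (\<pi> (0, s2))" by simp
      then have "y1 \<le> y2" using inc by simp
      then show ?thesis using T1 T2 JJ pinv_mono_even[OF ev] by simp
    qed
  qed
qed

lemma TX: "XX x \<Longrightarrow> XX (Tm x)"
proof -
  assume X: "XX x"
  have a: "\<forall>l\<in>Ls. 0 \<le> Tm x l \<and> Tm x l \<le> 1"
  proof
    fix l assume l: "l \<in> Ls"
    have y: "0 \<le> x (\<pi> l)" "x (\<pi> l) \<le> 1" using XX_a[OF X pi_in[OF l]] by simp_all
    show "0 \<le> Tm x l \<and> Tm x l \<le> 1"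
    proof (cases "fst l = 0")
      case True
      have sN: "snd l < N ! 0" using l True Ls_iff by (metis prod.collapse)
      have z: "0 \<le> real (pc (snd l)) / real (2*m+1)" by simp
      have o: "(real (pc (snd l)) + 1) / real (2*m+1) \<le> 1" using pcM1[OF sN] .
      have TT: "Tm x l = pinv m (pc (snd l)) (x (\<pi> l))" using True l by (simp add: Tm_def hh_def)
      note pr = pinv_range[OF y, where m=m and J="pc (snd l)"]
      show ?thesis unfolding TT using order_trans[OF z pr(1)] order_trans[OF pr(2) o] by simp
    next
      case False
      then show ?thesis using y l by (simp add: Tm_def hh_def)
    qed
  qed
  have b: "\<forall>r s1 s2. r < n \<and> s1 \<le> s2 \<and> s2 < N ! r \<longrightarrow> Tm x (r, s1) \<le> Tm x (r, s2)"
  proof (intro allI impI)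
    fix r s1 s2 assume h: "r < n \<and> s1 \<le> s2 \<and> s2 < N ! r"
    show "Tm x (r, s1) \<le> Tm x (r, s2)"
    proof (cases "s1 = s2")
      case True then show ?thesis by simp
    next
      case False
      then have lt: "s1 < s2" using h by simp
      show ?thesis
      proof (cases "r = 0")
        case True
        then show ?thesis using Tx0_mono[OF X lt] h by simp
      next
        case False
        then have r0: "0 < r" by simp
        have s1N: "s1 < N ! r" using h lt by simp
        define r' where "r' = (r + m) mod n"
        have r'n: "r' < n" using n0 by (simp add: r'_def)
        have p1: "\<pi> (r, s1) = (r', snd (\<pi> (r, s1)))" using R1[OF r0 _ s1N] h by (simp add: r'_def prod_eq_iff)
        have p2: "\<pi> (r, s2) = (r', snd (\<pi> (r, s2)))" "snd (\<pi> (r, s2)) < N ! r'"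
          using R1[OF r0 _ ] pi_in'[of r s2] h by (simp_all add: r'_def prod_eq_iff)
        have "snd (\<pi> (r, s1)) \<le> snd (\<pi> (r, s2))" using R2[OF r0 _ lt] h by (simp add: less_imp_le)
        then have "x (r', snd (\<pi> (r, s1))) \<le> x (r', snd (\<pi> (r, s2)))" using XX_b[OF X r'n _ p2(2)] by simp
        then show ?thesis using Tmr[OF r0, of s1] Tmr[OF r0, of s2] h s1N p1 p2 by simp
      qed
    qed
  qed
  have c: "\<forall>s < N ! 0. real (pc s) / real (2*m+1) \<le> Tm x (0, s) \<and> Tm x (0, s) \<le> (real (pc s) + 1) / real (2*m+1)"
  proof (intro allI impI)
    fix s assume s: "s < N ! 0"
    have y: "0 \<le> x (\<pi> (0, s))" "x (\<pi> (0, s)) \<le> 1" using XX_a[OF X pi_in[of "(0, s)"]] Ls_iff s n0 by simp_all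
    show "real (pc s) / real (2*m+1) \<le> Tm x (0, s) \<and> Tm x (0, s) \<le> (real (pc s) + 1) / real (2*m+1)"
      using pinv_range[OF y] Tm0[OF s] by simp
  qed
  show ?thesis using a b c by (simp add: XX_def)
qed

end

context bw begin

lemma Ls_fin: "finite Ls"
proof -
  have "Ls \<subseteq> {..<n} \<times> {..<Suc (Max (set N))}"
  proof
    fix l assume l: "l \<in> Ls"
    obtain r s where rs: "l = (r, s)" by (cases l)
    have r: "r < n" "s < N ! r" using l rs Ls_iff by auto
    have "N ! r \<in> set N" using r lenN by simp
    then have "N ! r \<le> Max (set N)" by simp
    then show "l \<in> {..<n} \<times> {..<Suc (Max (set N))}" using r rs by auto
  qed
  then show ?thesis by (rule finite_subset) simp
qed

lemma Ls00: "(0, 0) \<in> Ls" using Ls_iff n0 N0 by simp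

definition dlt :: "(nat \<times> nat \<Rightarrow> real) \<Rightarrow> (nat \<times> nat \<Rightarrow> real) \<Rightarrow> real" where
  "dlt u v = Max ((\<lambda>l. \<bar>u l - v l\<bar>) ` Ls)"

lemma dlt_ge: "l \<in> Ls \<Longrightarrow> \<bar>u l - v l\<bar> \<le> dlt u v"
  unfolding dlt_def using Ls_fin by (intro Max_ge) auto

lemma dlt_le: "(\<And>l. l \<in> Ls \<Longrightarrow> \<bar>u l - v l\<bar> \<le> b) \<Longrightarrow> dlt u v \<le> b"
  unfolding dlt_def using Ls_fin Ls00 by (subst Max_le_iff) auto

lemma dlt_nn: "0 \<le> dlt u v"
  using dlt_ge[OF Ls00, of u v] by simp

lemma Mge: "1 \<le> real (2*m+1)" by simp

lemma TC1: "l \<in> Ls \<Longrightarrow> \<bar>Tm u l - Tm v l\<bar> =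
   (if fst l = 0 then \<bar>u (\<pi> l) - v (\<pi> l)\<bar> / real (2*m+1) else \<bar>u (\<pi> l) - v (\<pi> l)\<bar>)"
  by (simp add: Tm_def hh_def pinv_diff)

lemma TC2: "\<forall>l\<in>Ls. \<bar>(Tm ^^ i) u l - (Tm ^^ i) v l\<bar> \<le> dlt u v \<and>
   ((\<exists>t<i. fst ((\<pi> ^^ t) l) = 0) \<longrightarrow> \<bar>(Tm ^^ i) u l - (Tm ^^ i) v l\<bar> \<le> dlt u v / real (2*m+1))"
proof (induction i)
  case 0
  then show ?case using dlt_ge by simp
next
  case (Suc i)
  show ?case
  proof
    fix l assume l: "l \<in> Ls"
    define d where "d = \<bar>(Tm ^^ i) u (\<pi> l) - (Tm ^^ i) v (\<pi> l)\<bar>"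
    have IH: "d \<le> dlt u v" "(\<exists>t<i. fst ((\<pi> ^^ t) (\<pi> l)) = 0) \<Longrightarrow> d \<le> dlt u v / real (2*m+1)"
      using Suc.IH pi_in[OF l] by (auto simp: d_def)
    have eq: "\<bar>(Tm ^^ Suc i) u l - (Tm ^^ Suc i) v l\<bar> = (if fst l = 0 then d / real (2*m+1) else d)"
      using TC1[OF l, of "(Tm ^^ i) u" "(Tm ^^ i) v"] by (simp add: d_def)
    have d0: "0 \<le> d" by (simp add: d_def)
    have c1: "\<bar>(Tm ^^ Suc i) u l - (Tm ^^ Suc i) v l\<bar> \<le> dlt u v"
    proof (cases "fst l = 0")
      case True
      have "d * 1 \<le> d * real (2*m+1)" by (rule mult_left_mono[OF Mge d0])
      then have "d / real (2*m+1) \<le> d" by (simp add: divide_le_eq)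
      then show ?thesis using eq True IH(1) by simp
    next
      case False then show ?thesis using eq IH(1) by simp
    qed
    have c2: "\<bar>(Tm ^^ Suc i) u l - (Tm ^^ Suc i) v l\<bar> \<le> dlt u v / real (2*m+1)"
      if ex: "\<exists>t<Suc i. fst ((\<pi> ^^ t) l) = 0"
    proof (cases "fst l = 0")
      case True
      then show ?thesis using eq IH(1) by (simp add: divide_right_mono)
    next
      case False
      obtain t where t: "t < Suc i" "fst ((\<pi> ^^ t) l) = 0" using ex by blast
      then obtain t' where t': "t = Suc t'" using False by (cases t) auto
      have "(\<pi> ^^ t) l = (\<pi> ^^ t') (\<pi> l)" unfolding t' by (simp only: funpow_Suc_right comp_apply)
      then have "\<exists>t<i. fst ((\<pi> ^^ t) (\<pi> l)) = 0" using t t' by auto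
      then show ?thesis using eq IH(2) False by simp
    qed
    show "\<bar>(Tm ^^ Suc i) u l - (Tm ^^ Suc i) v l\<bar> \<le> dlt u v \<and>
      ((\<exists>t<Suc i. fst ((\<pi> ^^ t) l) = 0) \<longrightarrow> \<bar>(Tm ^^ Suc i) u l - (Tm ^^ Suc i) v l\<bar> \<le> dlt u v / real (2*m+1))"
      using c1 c2 by blast
  qed
qed

lemma TC5: "dlt ((Tm ^^ i) u) ((Tm ^^ i) v) \<le> dlt u v"
  using TC2 by (intro dlt_le) blast

lemma Kexist: "\<exists>K. \<forall>l\<in>Ls. \<exists>t<K. fst ((\<pi> ^^ t) l) = 0"
proof -
  have "\<forall>l\<in>Ls. \<exists>t. (\<pi> ^^ t) l = (0, 0)" using tr Ls00 by blast
  then obtain f where f: "\<forall>l\<in>Ls. (\<pi> ^^ f l) l = (0, 0)" by metis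
  define K where "K = Suc (Max (f ` Ls))"
  have "\<forall>l\<in>Ls. f l < K" using Ls_fin by (simp add: K_def le_imp_less_Suc)
  then show ?thesis using f by (intro exI[of _ K]) force
qed

lemma TC4:
  assumes K: "\<forall>l\<in>Ls. \<exists>t<K. fst ((\<pi> ^^ t) l) = 0"
  shows "dlt ((Tm ^^ (j*K)) u) ((Tm ^^ (j*K)) v) \<le> dlt u v / real (2*m+1) ^ j"
proof (induction j)
  case 0 then show ?case by simp
next
  case (Suc j)
  let ?U = "(Tm ^^ (j*K)) u" and ?V = "(Tm ^^ (j*K)) v"
  have e: "Tm ^^ (Suc j * K) = Tm ^^ K \<circ> Tm ^^ (j*K)" by (simp add: funpow_add)
  have "dlt ((Tm ^^ K) ?U) ((Tm ^^ K) ?V) \<le> dlt ?U ?V / real (2*m+1)"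
    using TC2[of K ?U ?V] K by (intro dlt_le) blast
  also have "\<dots> \<le> (dlt u v / real (2*m+1) ^ j) / real (2*m+1)"
    by (rule divide_right_mono[OF Suc.IH]) simp
  also have "\<dots> = dlt u v / real (2*m+1) ^ Suc j" by (simp add: field_simps)
  finally show ?case using e by simp
qed

lemma XX_x0: "XX (\<lambda>l. if fst l = 0 then real (pc (snd l)) / real (2*m+1) else 0)"
proof -
  have a: "\<forall>l\<in>Ls. 0 \<le> (if fst l = 0 then real (pc (snd l)) / real (2*m+1) else 0) \<and>
      (if fst l = 0 then real (pc (snd l)) / real (2*m+1) else 0) \<le> 1"
  proof
    fix l assume l: "l \<in> Ls"
    show "0 \<le> (if fst l = 0 then real (pc (snd l)) / real (2*m+1) else 0) \<and>
      (if fst l = 0 then real (pc (snd l)) / real (2*m+1) else 0) \<le> 1"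
    proof (cases "fst l = 0")
      case True
      then have "snd l < N ! 0" using l Ls_iff by (metis prod.collapse)
      then have "pc (snd l) \<le> 2*m" by (rule pc_le)
      then show ?thesis using True by (simp add: field_simps)
    qed simp
  qed
  have b: "\<forall>r s1 s2. r < n \<and> s1 \<le> s2 \<and> s2 < N ! r \<longrightarrow>
     (if fst (r, s1) = 0 then real (pc (snd (r, s1))) / real (2*m+1) else 0) \<le>
     (if fst (r, s2) = 0 then real (pc (snd (r, s2))) / real (2*m+1) else 0)"
    using pc_mono by (auto simp: divide_right_mono)
  show ?thesis unfolding XX_def using a b by (simp add: divide_right_mono)
qed

lemma fixed_point: "\<exists>xs. XX xs \<and> (\<forall>l\<in>Ls. xs l = hh l (xs (\<pi> l)))"
proof -
  obtain K where K: "\<forall>l\<in>Ls. \<exists>t<K. fst ((\<pi> ^^ t) l) = 0" using Kexist by blast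
  define x0 :: "nat \<times> nat \<Rightarrow> real" where "x0 = (\<lambda>l. if fst l = 0 then real (pc (snd l)) / real (2*m+1) else 0)"
  have X0: "XX x0" using XX_x0 by (simp add: x0_def)
  have Xi: "XX ((Tm ^^ i) x0)" for i by (induction i) (auto simp: X0 TX)
  define y where "y j = (Tm ^^ (j*K)) x0" for j
  define q :: real where "q = 1 / real (2*m+1)"
  have q: "0 < q" "q < 1" using m_pos by (simp_all add: q_def)
  define c0 where "c0 = dlt ((Tm ^^ K) x0) x0"
  define c1 where "c1 = dlt (Tm x0) x0"
  have bnd1: "\<bar>y (Suc j) l - y j l\<bar> \<le> c0 * q ^ j" if l: "l \<in> Ls" for j l
  proof -
    have sj: "Suc j * K = j * K + K" by simp
    have "y (Suc j) = (Tm ^^ (j*K)) ((Tm ^^ K) x0)"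
      by (simp only: y_def sj funpow_add comp_apply)
    then have "\<bar>y (Suc j) l - y j l\<bar> \<le> dlt ((Tm ^^ (j*K)) ((Tm ^^ K) x0)) ((Tm ^^ (j*K)) x0)"
      using dlt_ge[OF l] by (simp add: y_def)
    also have "\<dots> \<le> c0 / real (2*m+1) ^ j" using TC4[OF K] by (simp add: c0_def)
    also have "\<dots> = c0 * q ^ j" by (simp add: q_def power_one_over divide_inverse power_inverse)
    finally show ?thesis .
  qed
  have bnd2: "\<bar>Tm (y j) l - y j l\<bar> \<le> c1 * q ^ j" if l: "l \<in> Ls" for j l
  proof -
    have "Tm (y j) = (Tm ^^ (j*K)) (Tm x0)" by (simp add: y_def funpow_swap1)
    then have "\<bar>Tm (y j) l - y j l\<bar> \<le> dlt ((Tm ^^ (j*K)) (Tm x0)) ((Tm ^^ (j*K)) x0)"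
      using dlt_ge[OF l] by (simp add: y_def)
    also have "\<dots> \<le> c1 / real (2*m+1) ^ j" using TC4[OF K] by (simp add: c1_def)
    also have "\<dots> = c1 * q ^ j" by (simp add: q_def power_one_over divide_inverse power_inverse)
    finally show ?thesis .
  qed
  have conv: "convergent (\<lambda>j. y j l)" if l: "l \<in> Ls" for l
  proof -
    have sg: "summable (\<lambda>j. c0 * q ^ j)" using q by (intro summable_mult summable_geometric) simp
    have sm: "summable (\<lambda>j. y (Suc j) l - y j l)"
      by (rule summable_comparison_test'[OF sg, of 0]) (use bnd1[OF l] in simp)
    have "(\<lambda>j. \<Sum>i<j. y (Suc i) l - y i l) \<longlonglongrightarrow> suminf (\<lambda>j. y (Suc j) l - y j l)"
      using summable_LIMSEQ[OF sm] .
    then have "(\<lambda>j. y j l - y 0 l) \<longlonglongrightarrow> suminf (\<lambda>j. y (Suc j) l - y j l)"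
      by (simp add: sum_lessThan_telescope[of "\<lambda>i. y i l"])
    then have "(\<lambda>j. y j l - y 0 l + y 0 l) \<longlonglongrightarrow> suminf (\<lambda>j. y (Suc j) l - y j l) + y 0 l"
      by (intro tendsto_add) auto
    then show ?thesis unfolding convergent_def by auto
  qed
  define xs where "xs l = lim (\<lambda>j. y j l)" for l
  have lim: "(\<lambda>j. y j l) \<longlonglongrightarrow> xs l" if "l \<in> Ls" for l
    using conv[OF that] by (simp add: xs_def convergent_LIMSEQ_iff)
  have fixeq: "xs l = hh l (xs (\<pi> l))" if l: "l \<in> Ls" for l
  proof -
    have A1: "(\<lambda>j. hh l (y j (\<pi> l))) \<longlonglongrightarrow> hh l (xs (\<pi> l))"
    proof -
      have M0: "1 + 2 * real m \<noteq> 0"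
      proof -
        have "0 \<le> real m" by simp
        then show ?thesis by linarith
      qed
      have L: "(\<lambda>j. y j (\<pi> l)) \<longlonglongrightarrow> xs (\<pi> l)" using lim[OF pi_in[OF l]] .
      show ?thesis
      proof (cases "fst l = 0")
        case True
        show ?thesis
        proof (cases "even (pc (snd l))")
          case True
          then show ?thesis using \<open>fst l = 0\<close> L by (simp add: hh_def pinv_def) (intro tendsto_intros; use M0 in simp)
        next
          case False
          then show ?thesis using \<open>fst l = 0\<close> L by (simp add: hh_def pinv_def) (intro tendsto_intros; use M0 in simp)
        qed
      next
        case False then show ?thesis using L by (simp add: hh_def)
      qed
    qed
    have z: "(\<lambda>j. Tm (y j) l - y j l) \<longlonglongrightarrow> 0"
    proof (rule tendsto_0_le[of "\<lambda>j. q ^ j" _ _ c1])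
      show "(\<lambda>j. q ^ j) \<longlonglongrightarrow> 0" using q by (intro LIMSEQ_power_zero) simp
      show "\<forall>\<^sub>F j in sequentially. norm (Tm (y j) l - y j l) \<le> norm (q ^ j) * c1"
        using bnd2[OF l] q by (simp add: mult.commute)
    qed
    have "(\<lambda>j. Tm (y j) l) \<longlonglongrightarrow> xs l" by (rule Lim_transform[OF lim[OF l] z])
    moreover have "(\<lambda>j. Tm (y j) l) = (\<lambda>j. hh l (y j (\<pi> l)))" using l by (simp add: Tm_def)
    ultimately show ?thesis using A1 LIMSEQ_unique by metis
  qed
  have Xy: "XX (y j)" for j using Xi by (simp add: y_def)
  have XXxs: "XX xs"
  proof -
    have a: "\<forall>l\<in>Ls. 0 \<le> xs l \<and> xs l \<le> 1"
    proof
      fix l assume l: "l \<in> Ls"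
      have "0 \<le> xs l" using lim[OF l] XX_a[OF Xy l] by (intro LIMSEQ_le_const) auto
      moreover have "xs l \<le> 1" using lim[OF l] XX_a[OF Xy l] by (intro LIMSEQ_le_const2) auto
      ultimately show "0 \<le> xs l \<and> xs l \<le> 1" by simp
    qed
    have b: "\<forall>r s1 s2. r < n \<and> s1 \<le> s2 \<and> s2 < N ! r \<longrightarrow> xs (r, s1) \<le> xs (r, s2)"
    proof (intro allI impI)
      fix r s1 s2 assume h: "r < n \<and> s1 \<le> s2 \<and> s2 < N ! r"
      have l1: "(r, s1) \<in> Ls" "(r, s2) \<in> Ls" using h Ls_iff by auto
      show "xs (r, s1) \<le> xs (r, s2)"
        using lim[OF l1(1)] lim[OF l1(2)] XX_b[OF Xy] h by (intro LIMSEQ_le) auto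
    qed
    have c: "\<forall>s < N ! 0. real (pc s) / real (2*m+1) \<le> xs (0, s) \<and> xs (0, s) \<le> (real (pc s) + 1) / real (2*m+1)"
    proof (intro allI impI)
      fix s assume s: "s < N ! 0"
      have l: "(0, s) \<in> Ls" using s Ls_iff n0 by simp
      have "real (pc s) / real (2*m+1) \<le> xs (0, s)" using lim[OF l] XX_c[OF Xy s] by (intro LIMSEQ_le_const) auto
      moreover have "xs (0, s) \<le> (real (pc s) + 1) / real (2*m+1)" using lim[OF l] XX_c[OF Xy s] by (intro LIMSEQ_le_const2) auto
      ultimately show "real (pc s) / real (2*m+1) \<le> xs (0, s) \<and> xs (0, s) \<le> (real (pc s) + 1) / real (2*m+1)" by simp
    qed
    show ?thesis using a b c by (simp add: XX_def)
  qed
  show ?thesis using XXxs fixeq by blast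
qed

end

context bw begin

definition xs :: "nat \<times> nat \<Rightarrow> real" where
  "xs = (SOME x. XX x \<and> (\<forall>l\<in>Ls. x l = hh l (x (\<pi> l))))"

lemma xs_prop: "XX xs \<and> (\<forall>l\<in>Ls. xs l = hh l (xs (\<pi> l)))"
  unfolding xs_def using fixed_point by (rule someI_ex)

lemma xs_X: "XX xs" using xs_prop by simp
lemma xs_fix: "l \<in> Ls \<Longrightarrow> xs l = hh l (xs (\<pi> l))" using xs_prop by simp

lemma xs01: "l \<in> Ls \<Longrightarrow> 0 \<le> xs l \<and> xs l \<le> 1" using XX_a[OF xs_X] .
lemma xs_mono: "r < n \<Longrightarrow> s1 \<le> s2 \<Longrightarrow> s2 < N ! r \<Longrightarrow> xs (r, s1) \<le> xs (r, s2)" using XX_b[OF xs_X] .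
lemma xs_piece: "s < N ! 0 \<Longrightarrow> real (pc s) / real (2*m+1) \<le> xs (0, s) \<and> xs (0, s) \<le> (real (pc s) + 1) / real (2*m+1)"
  using XX_c[OF xs_X] .

lemma xs_fix0: "s < N ! 0 \<Longrightarrow> xs (0, s) = pinv m (pc s) (xs (\<pi> (0, s)))"
  using xs_fix[of "(0, s)"] Ls_iff n0 by (simp add: hh_def)
lemma xs_fixr: "0 < r \<Longrightarrow> r < n \<Longrightarrow> s < N ! r \<Longrightarrow> xs (r, s) = xs (\<pi> (r, s))"
  using xs_fix[of "(r, s)"] Ls_iff by (simp add: hh_def)

lemma gj_xs0: "s < N ! 0 \<Longrightarrow> gj m (pc s) (xs (0, s)) = xs (\<pi> (0, s))"
  using xs_fix0 gj_pinv by simp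

definition pos :: "nat \<times> nat \<Rightarrow> gpt" where "pos l = mkpt (fst l) (xs l)"

lemma PosF: "l \<in> Ls \<Longrightarrow> fmap m n (pos l) = pos (\<pi> l)"
proof -
  assume l: "l \<in> Ls"
  obtain r s where rs: "l = (r, s)" by (cases l)
  have rn: "r < n" "s < N ! r" using l rs Ls_iff by auto
  show ?thesis
  proof (cases "r = 0")
    case True
    have sN: "s < N ! 0" using rn True by simp
    define y where "y = xs (\<pi> (0, s))"
    have y: "0 \<le> y" "y \<le> 1" using xs01[OF pi_in[of "(0, s)"]] Ls_iff sN n0 by (simp_all add: y_def)
    define J where "J = pc s"
    have t: "xs (0, s) = pinv m J y" using xs_fix0[OF sN] by (simp add: y_def J_def)
    note pr = pinv_range[OF y, where m=m and J=J]
    have M: "0 < real (2*m+1)" by simp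
    have a1: "real J \<le> real (2*m+1) * xs (0, s)" using pr(1) t M by (simp add: field_simps)
    have a2: "real (2*m+1) * xs (0, s) \<le> real J + 1" using pr(2) t M by (simp add: field_simps)
    have JJ: "J \<le> 2*m" using pc_le[OF sN] by (simp add: J_def)
    have x01: "0 \<le> xs (0, s)" "xs (0, s) \<le> 1" using xs01[of "(0, s)"] Ls_iff sN n0 by auto
    have "fmap m n (mkpt 0 (xs (0, s))) = mkpt ((J+1) div 2) (gj m J (xs (0, s)))"
      using fmap0_closed[OF a1 a2 JJ x01] .
    also have "\<dots> = mkpt (fst (\<pi> (0, s))) y" using pc_tg[OF sN] gj_xs0[OF sN] by (simp add: J_def y_def)
    finally show ?thesis using True rs by (simp add: pos_def y_def)
  next
    case False
    then have r0: "0 < r" by simp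
    have e: "xs (r, s) = xs (\<pi> (r, s))" using xs_fixr[OF r0 rn] .
    have f: "fst (\<pi> (r, s)) = (r + m) mod n" using R1[OF r0 rn] .
    show ?thesis
    proof (cases "1 \<le> xs (r, s)")
      case True
      then show ?thesis using rs e by (simp add: pos_def mkpt_def)
    next
      case False
      then show ?thesis using rs e f r0 by (simp add: pos_def mkpt_def)
    qed
  qed
qed

lemma PosIter: "l \<in> Ls \<Longrightarrow> (fmap m n ^^ i) (pos l) = pos ((\<pi> ^^ i) l)"
proof (induction i)
  case 0 then show ?case by simp
next
  case (Suc i)
  have "(fmap m n ^^ Suc i) (pos l) = fmap m n (pos ((\<pi> ^^ i) l))" using Suc by simp
  also have "\<dots> = pos (\<pi> ((\<pi> ^^ i) l))" using PosF funpow_in_Ls[OF Suc.prems] by blast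
  finally show ?case by simp
qed

lemma xs_lt1: "l \<in> Ls \<Longrightarrow> xs l < 1"
proof (rule ccontr)
  assume l: "l \<in> Ls" and "\<not> xs l < 1"
  then have "pos l = Vtx" by (simp add: pos_def mkpt_def)
  obtain i where i: "(\<pi> ^^ i) l = (0, 0)" using tr[OF l Ls00] by blast
  have vv: "(fmap m n ^^ j) Vtx = Vtx" for j by (induction j) auto
  have "pos (0, 0) = Vtx" using PosIter[OF l, of i] i \<open>pos l = Vtx\<close> vv by simp
  then have "1 \<le> xs (0, 0)" by (simp add: pos_def mkpt_def split: if_splits)
  moreover have "xs (0, 0) \<le> (real (pc 0) + 1) / real (2*m+1)" using xs_piece[OF N0] by simp
  moreover have "(real (pc 0) + 1) / real (2*m+1) < 1" using pc_0 by (simp add: field_simps)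
  ultimately show False by simp
qed

lemma pos_Pt: "l \<in> Ls \<Longrightarrow> pos l = Pt (fst l) (xs l)"
proof -
  assume l: "l \<in> Ls"
  have "\<not> 1 \<le> xs l" using xs_lt1[OF l] by simp
  then show ?thesis by (simp add: pos_def mkpt_def)
qed

lemma xs_pos0: "r < n \<Longrightarrow> xs (r, 0) \<noteq> 0"
proof
  assume r: "r < n" and z: "xs (r, 0) = 0"
  let ?S = "{r. r < n \<and> xs (r, 0) = 0}"
  have "0 \<in> ?S"
  proof (rule coprime_reach0[OF m_pos cop])
    show "r \<in> ?S" using r z by simp
    show "r < n" using r .
    fix r assume h: "r \<in> ?S" "0 < r" "r < n"
    have N: "0 < N ! r" using Npos h by simp
    have "\<pi> (r, 0) = ((r + m) mod n, 0)" using R1[OF h(2,3) N] R3[OF h(2,3)] by (simp add: prod_eq_iff)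
    then show "(r + m) mod n \<in> ?S" using xs_fixr[OF h(2,3) N] h n0 by simp
  qed
  then have z0: "xs (0, 0) = 0" by simp
  have fx: "(fmap m n ^^ i) (Pt 0 0) = Pt 0 0" for i by (induction i) (auto simp: mkpt_def)
  have l1: "(1, 0) \<in> Ls" using Ls_iff n_ge2 Npos[of 1] by simp
  obtain i where i: "(\<pi> ^^ i) (0, 0) = (1, 0)" using tr[OF Ls00 l1] by blast
  have "pos (1, 0) = Pt 0 0" using PosIter[OF Ls00, of i] i z0 pos_Pt[OF Ls00] fx by simp
  then show False using pos_Pt[OF l1] by simp
qed

lemma xs_pos: "l \<in> Ls \<Longrightarrow> 0 < xs l"
proof -
  assume l: "l \<in> Ls"
  obtain r s where rs: "l = (r, s)" by (cases l)
  have rn: "r < n" "s < N ! r" using l rs Ls_iff by auto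
  have "xs (r, 0) \<le> xs (r, s)" using xs_mono[OF rn(1) _ rn(2)] by simp
  moreover have "0 \<le> xs (r, 0)" using xs01[of "(r, 0)"] Ls_iff rn by simp
  ultimately show ?thesis using xs_pos0[OF rn(1)] rs by simp
qed

lemma ND4:
  assumes s: "s < N ! 0"
  shows "real (pc s) < real (2*m+1) * xs (0, s)" "real (2*m+1) * xs (0, s) < real (pc s) + 1"
proof -
  have l: "(0, s) \<in> Ls" using s Ls_iff n0 by simp
  have M: "0 < real (2*m+1)" by simp
  have pr: "real (pc s) \<le> real (2*m+1) * xs (0, s)" "real (2*m+1) * xs (0, s) \<le> real (pc s) + 1"
    using xs_piece[OF s] M by (simp_all add: field_simps)
  have nb: False if br: "real (2*m+1) * xs (0, s) = real J'" for J'
  proof -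
    have t: "0 \<le> xs (0, s)" "xs (0, s) < 1" using xs01[OF l] xs_lt1[OF l] by auto
    have p: "0 < xs (0, s)" using xs_pos[OF l] .
    have J0: "J' \<noteq> 0"
    proof
      assume "J' = 0"
      then have "real (2*m+1) * xs (0, s) = 0" using br by simp
      then show False using p by simp
    qed
    have f: "fmap m n (Pt 0 (xs (0, s))) = (if odd J' then Vtx else Pt (J' div 2) 0)"
      using fmap_break[OF br t J0] .
    have "fmap m n (Pt 0 (xs (0, s))) = pos (\<pi> (0, s))" using PosF[OF l] pos_Pt[OF l] by simp
    also have "\<dots> = Pt (fst (\<pi> (0, s))) (xs (\<pi> (0, s)))" using pos_Pt[OF pi_in[OF l]] .
    finally have e: "(if odd J' then Vtx else Pt (J' div 2) 0) = Pt (fst (\<pi> (0, s))) (xs (\<pi> (0, s)))"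
      using f by simp
    then have "xs (\<pi> (0, s)) = 0" by (cases "odd J'") auto
    then show False using xs_pos[OF pi_in[OF l]] by simp
  qed
  show "real (pc s) < real (2*m+1) * xs (0, s)"
    using pr(1) nb[of "pc s"] by (cases "real (2*m+1) * xs (0, s) = real (pc s)") auto
  show "real (2*m+1) * xs (0, s) < real (pc s) + 1" using pr(2) nb[of "pc s + 1"] by (auto simp: less_le)
qed

lemma ND4f: "s < N ! 0 \<Longrightarrow> nat \<lfloor>real (2*m+1) * xs (0, s)\<rfloor> = pc s"
proof -
  assume s: "s < N ! 0"
  have "\<lfloor>real (2*m+1) * xs (0, s)\<rfloor> = int (pc s)"
    using ND4[OF s] by (subst floor_eq_iff) simp
  then show ?thesis by simp
qed

end

context bw begin

definition Blk :: "nat \<times> nat \<Rightarrow> (nat \<times> nat) set" where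
  "Blk l = {l' \<in> Ls. fst l' = fst l \<and> xs l' = xs l}"

lemma Blk_sub: "Blk l \<subseteq> Ls" by (auto simp: Blk_def)
lemma Blk_fin: "finite (Blk l)" using Blk_sub Ls_fin by (rule finite_subset)
lemma Blk_self: "l \<in> Ls \<Longrightarrow> l \<in> Blk l" by (simp add: Blk_def)
lemma Blk_snd_inj: "a \<in> Blk l \<Longrightarrow> b \<in> Blk l \<Longrightarrow> snd a = snd b \<Longrightarrow> a = b"
  by (auto simp: Blk_def prod_eq_iff)

lemma Blk_pi: "l \<in> Ls \<Longrightarrow> \<pi> ` Blk l \<subseteq> Blk (\<pi> l)"
proof
  fix y assume l: "l \<in> Ls" and "y \<in> \<pi> ` Blk l"
  then obtain l' where l': "l' \<in> Blk l" "y = \<pi> l'" by blast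
  have l'L: "l' \<in> Ls" using l'(1) Blk_sub[of l] by blast
  have "pos l' = pos l" using l' pos_Pt[OF l'L] pos_Pt[OF l] by (simp add: Blk_def)
  then have "pos (\<pi> l') = pos (\<pi> l)" using PosF[OF l] PosF[OF l'L] by metis
  then show "y \<in> Blk (\<pi> l)" using pos_Pt[OF pi_in[OF l]] pos_Pt[OF pi_in[OF l'L]] pi_in[OF l'L] l'
    by (simp add: Blk_def)
qed

lemma Blk_card_le: "l \<in> Ls \<Longrightarrow> card (Blk l) \<le> card (Blk (\<pi> l))"
proof -
  assume l: "l \<in> Ls"
  have "card (\<pi> ` Blk l) = card (Blk l)" using pi_inj by (simp add: card_image inj_on_subset)
  moreover have "card (\<pi> ` Blk l) \<le> card (Blk (\<pi> l))" using Blk_pi[OF l] Blk_fin by (rule card_mono[rotated])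
  ultimately show ?thesis by simp
qed

lemma Blk_card_iter: "l \<in> Ls \<Longrightarrow> card (Blk l) \<le> card (Blk ((\<pi> ^^ i) l))"
proof (induction i)
  case 0 then show ?case by simp
next
  case (Suc i)
  then show ?case using Blk_card_le[OF funpow_in_Ls[OF Suc.prems, of i]] by simp
qed

definition qq where "qq = card (Blk (0, 0))"

lemma Blk_card: "l \<in> Ls \<Longrightarrow> card (Blk l) = qq"
proof -
  assume l: "l \<in> Ls"
  obtain i where i: "(\<pi> ^^ i) (0, 0) = l" using tr[OF Ls00 l] by blast
  obtain j where j: "(\<pi> ^^ j) l = (0, 0)" using tr[OF l Ls00] by blast
  show ?thesis using Blk_card_iter[OF Ls00, of i] Blk_card_iter[OF l, of j] i j by (simp add: qq_def)
qed

lemma Blk_img: "l \<in> Ls \<Longrightarrow> \<pi> ` Blk l = Blk (\<pi> l)"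
proof -
  assume l: "l \<in> Ls"
  have "card (\<pi> ` Blk l) = card (Blk (\<pi> l))"
    using pi_inj Blk_card[OF l] Blk_card[OF pi_in[OF l]] by (simp add: card_image inj_on_subset)
  then show ?thesis using card_subset_eq[OF Blk_fin Blk_pi[OF l]] by simp
qed

lemma qq_pos: "0 < qq"
  using Blk_self[OF Ls00] Blk_fin by (simp add: qq_def card_gt_0_iff) blast

definition ix :: "nat \<times> nat \<Rightarrow> nat" where "ix l = card {l' \<in> Blk l. snd l' < snd l}"

lemma ix_above: "l \<in> Ls \<Longrightarrow> card {l' \<in> Blk l. snd l < snd l'} = qq - 1 - ix l \<and> ix l \<le> qq - 1"
proof -
  assume l: "l \<in> Ls"
  let ?L = "{l' \<in> Blk l. snd l' < snd l}" and ?U = "{l' \<in> Blk l. snd l < snd l'}"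
  have split: "Blk l = ?L \<union> {l} \<union> ?U"
  proof
    show "Blk l \<subseteq> ?L \<union> {l} \<union> ?U"
    proof
      fix a assume a: "a \<in> Blk l"
      have "snd a < snd l \<or> snd a = snd l \<or> snd l < snd a" by auto
      then show "a \<in> ?L \<union> {l} \<union> ?U" using a Blk_snd_inj[OF a Blk_self[OF l]] by auto
    qed
    show "?L \<union> {l} \<union> ?U \<subseteq> Blk l" using Blk_self[OF l] by auto
  qed
  have fL: "finite ?L" "finite ?U" using Blk_fin by auto
  have "card (Blk l) = card ?L + 1 + card ?U"
  proof -
    have "card (?L \<union> {l} \<union> ?U) = card (?L \<union> {l}) + card ?U"
      using fL by (intro card_Un_disjoint) auto
    also have "card (?L \<union> {l}) = card ?L + 1" using fL by (subst card_Un_disjoint) auto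
    finally show ?thesis using split by simp
  qed
  then show ?thesis using Blk_card[OF l] by (simp add: ix_def)
qed

definition prs :: "nat \<times> nat \<Rightarrow> bool" where
  "prs l \<longleftrightarrow> (\<forall>a\<in>Blk l. \<forall>b\<in>Blk l. snd a < snd b \<longrightarrow> snd (\<pi> a) < snd (\<pi> b))"
definition rvs :: "nat \<times> nat \<Rightarrow> bool" where
  "rvs l \<longleftrightarrow> (\<forall>a\<in>Blk l. \<forall>b\<in>Blk l. snd a < snd b \<longrightarrow> snd (\<pi> b) < snd (\<pi> a))"

lemma ND7a: "l \<in> Ls \<Longrightarrow> prs l \<Longrightarrow> ix (\<pi> l) = ix l"
proof -
  assume l: "l \<in> Ls" and p: "prs l"
  have "{l'' \<in> Blk (\<pi> l). snd l'' < snd (\<pi> l)} = \<pi> ` {l' \<in> Blk l. snd l' < snd l}"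
  proof
    show "\<pi> ` {l' \<in> Blk l. snd l' < snd l} \<subseteq> {l'' \<in> Blk (\<pi> l). snd l'' < snd (\<pi> l)}"
      using Blk_pi[OF l] p Blk_self[OF l] by (auto simp: prs_def)
    show "{l'' \<in> Blk (\<pi> l). snd l'' < snd (\<pi> l)} \<subseteq> \<pi> ` {l' \<in> Blk l. snd l' < snd l}"
    proof
      fix y assume y: "y \<in> {l'' \<in> Blk (\<pi> l). snd l'' < snd (\<pi> l)}"
      then have "y \<in> \<pi> ` Blk l" using Blk_img[OF l] by simp
      then obtain a where a: "a \<in> Blk l" "y = \<pi> a" by blast
      have "snd a < snd l"
      proof (rule ccontr)
        assume "\<not> snd a < snd l"
        then have "snd a = snd l \<or> snd l < snd a" by auto
        then show False
        proof
          assume "snd a = snd l"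
          then have "a = l" using Blk_snd_inj[OF a(1) Blk_self[OF l]] by simp
          then show False using y a by simp
        next
          assume "snd l < snd a"
          then have "snd (\<pi> l) < snd (\<pi> a)" using p Blk_self[OF l] a(1) by (auto simp: prs_def)
          then show False using y a by simp
        qed
      qed
      then show "y \<in> \<pi> ` {l' \<in> Blk l. snd l' < snd l}" using a by auto
    qed
  qed
  then show ?thesis using pi_inj by (simp add: ix_def card_image inj_on_subset)
qed

lemma ND7b: "l \<in> Ls \<Longrightarrow> rvs l \<Longrightarrow> ix (\<pi> l) = qq - 1 - ix l"
proof -
  assume l: "l \<in> Ls" and p: "rvs l"
  have "{l'' \<in> Blk (\<pi> l). snd l'' < snd (\<pi> l)} = \<pi> ` {l' \<in> Blk l. snd l < snd l'}"
  proof
    show "\<pi> ` {l' \<in> Blk l. snd l < snd l'} \<subseteq> {l'' \<in> Blk (\<pi> l). snd l'' < snd (\<pi> l)}"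
      using Blk_pi[OF l] p Blk_self[OF l] by (auto simp: rvs_def)
    show "{l'' \<in> Blk (\<pi> l). snd l'' < snd (\<pi> l)} \<subseteq> \<pi> ` {l' \<in> Blk l. snd l < snd l'}"
    proof
      fix y assume y: "y \<in> {l'' \<in> Blk (\<pi> l). snd l'' < snd (\<pi> l)}"
      then have "y \<in> \<pi> ` Blk l" using Blk_img[OF l] by simp
      then obtain a where a: "a \<in> Blk l" "y = \<pi> a" by blast
      have "snd l < snd a"
      proof (rule ccontr)
        assume "\<not> snd l < snd a"
        then have "snd a = snd l \<or> snd a < snd l" by auto
        then show False
        proof
          assume "snd a = snd l"
          then have "a = l" using Blk_snd_inj[OF a(1) Blk_self[OF l]] by simp
          then show False using y a by simp
        next
          assume "snd a < snd l"
          then have "snd (\<pi> l) < snd (\<pi> a)" using p Blk_self[OF l] a(1) by (auto simp: rvs_def)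
          then show False using y a by simp
        qed
      qed
      then show "y \<in> \<pi> ` {l' \<in> Blk l. snd l < snd l'}" using a by auto
    qed
  qed
  then have "ix (\<pi> l) = card {l' \<in> Blk l. snd l < snd l'}"
    using pi_inj by (simp add: ix_def card_image inj_on_subset)
  then show ?thesis using ix_above[OF l] by simp
qed

lemma Blk0: "s < N ! 0 \<Longrightarrow> Blk (0, s) = Pair 0 ` {a. a < N ! 0 \<and> xs (0, a) = xs (0, s)}"
  by (auto simp: Blk_def Ls_iff n0)

lemma Blk0_pc: "s < N ! 0 \<Longrightarrow> a \<in> Blk (0, s) \<Longrightarrow> a = (0, snd a) \<and> snd a < N ! 0 \<and> pc (snd a) = pc s"
proof -
  assume s: "s < N ! 0" and a: "a \<in> Blk (0, s)"
  then obtain b where b: "a = (0, b)" "b < N ! 0" "xs (0, b) = xs (0, s)" using Blk0 by auto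
  then have "pc b = pc s" using ND4f[OF s] ND4f[OF b(2)] by simp
  then show ?thesis using b by simp
qed

lemma pi_snd_pos: "s < N ! 0 \<Longrightarrow> s \<noteq> c \<Longrightarrow> fst (\<pi> (0, s)) = m \<Longrightarrow> 0 < snd (\<pi> (0, s))"
proof (rule ccontr)
  assume s: "s < N ! 0" "s \<noteq> c" "fst (\<pi> (0, s)) = m" and "\<not> 0 < snd (\<pi> (0, s))"
  then have "\<pi> (0, s) = \<pi> (0, c)" using pic by (simp add: prod_eq_iff)
  then show False using pi_inj s(2) by (auto dest: injD)
qed

lemma ND6: "l \<in> Ls \<Longrightarrow> prs l \<or> rvs l"
proof -
  assume l: "l \<in> Ls"
  obtain r s where rs: "l = (r, s)" by (cases l)
  have rn: "r < n" "s < N ! r" using l rs Ls_iff by auto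
  show ?thesis
  proof (cases "r = 0")
    case False
    then have r0: "0 < r" by simp
    have "prs l" unfolding prs_def
    proof (intro ballI impI)
      fix a b assume ab: "a \<in> Blk l" "b \<in> Blk l" "snd a < snd b"
      have fa: "a = (r, snd a)" "b = (r, snd b)" using ab rs by (auto simp: Blk_def prod_eq_iff)
      have "snd b < N ! r" using ab(2) fa Blk_sub Ls_iff by (metis subsetD)
      then show "snd (\<pi> a) < snd (\<pi> b)" using R2[OF r0 rn(1) ab(3)] fa by metis
    qed
    then show ?thesis by simp
  next
    case True
    have sN: "s < N ! 0" using rn True by simp
    have mem: "a \<in> Blk l \<Longrightarrow> a = (0, snd a) \<and> snd a < N ! 0 \<and> pc (snd a) = pc s" for a
      using Blk0_pc[OF sN] rs True by simp
    have tgeq: "a \<in> Blk l \<Longrightarrow> fst (\<pi> (0, snd a)) = fst (\<pi> (0, s))" for a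
      using mem pc_tg[OF sN] pc_tg by metis
    show ?thesis
    proof (cases "even (pc s)")
      case ev: True
      have "prs l" unfolding prs_def
      proof (intro ballI impI)
        fix a b assume ab: "a \<in> Blk l" "b \<in> Blk l" "snd a < snd b"
        note ma = mem[OF ab(1)] and mb = mem[OF ab(2)]
        have fe: "fst (\<pi> (0, snd a)) = fst (\<pi> (0, snd b))" using tgeq ab by metis
        have "snd (\<pi> (0, snd a)) < snd (\<pi> (0, snd b))"
        proof (cases "snd b = c")
          case True
          have "snd a \<noteq> c" using ab(3) True by simp
          then have "snd a \<in> B" using pc_parity[of "snd a"] ma ev by simp
          then have "c \<in> B" using R9[OF ab(3) mb[THEN conjunct2, THEN conjunct1] fe] True by simp
          then show ?thesis using cC part(4) by auto
        next
          case bc: False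
          then have bB: "snd b \<in> B" using pc_parity[of "snd b"] mb ev by simp
          show ?thesis
          proof (cases "snd a = c")
            case True
            have "fst (\<pi> (0, snd b)) = m" using fe True pic by simp
            then have "0 < snd (\<pi> (0, snd b))" using pi_snd_pos[OF _ bc] mb by simp
            then show ?thesis using True pic by simp
          next
            case False
            then have "snd a \<in> B" using pc_parity[of "snd a"] ma ev by simp
            then show ?thesis using R11[OF ab(3) _ fe _ bB] mb by simp
          qed
        qed
        then show "snd (\<pi> a) < snd (\<pi> b)" using ma mb by metis
      qed
      then show ?thesis by simp
    next
      case od: False
      have "rvs l" unfolding rvs_def
      proof (intro ballI impI)
        fix a b assume ab: "a \<in> Blk l" "b \<in> Blk l" "snd a < snd b"
        note ma = mem[OF ab(1)] and mb = mem[OF ab(2)]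
        have fe: "fst (\<pi> (0, snd a)) = fst (\<pi> (0, snd b))" using tgeq ab by metis
        have "snd (\<pi> (0, snd b)) < snd (\<pi> (0, snd a))"
        proof (cases "snd a = c")
          case True
          have bc: "snd b \<noteq> c" using ab(3) True by simp
          have "snd b \<in> B" using R9[OF ab(3) mb[THEN conjunct2, THEN conjunct1] fe] True cC by simp
          then show ?thesis using pc_parity[of "snd b"] mb od bc by simp
        next
          case ac: False
          then have aA: "snd a \<in> A" using pc_parity[of "snd a"] ma od ABC_cases[of "snd a"] by auto
          show ?thesis
          proof (cases "snd b = c")
            case True
            have "fst (\<pi> (0, snd a)) = m" using fe True pic by simp
            then have "0 < snd (\<pi> (0, snd a))" using pi_snd_pos[OF _ ac] ma by simp
            then show ?thesis using True pic by simp
          next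
            case False
            then have "snd b \<in> A" using pc_parity[of "snd b"] mb od ABC_cases[of "snd b"] by auto
            then show ?thesis using R10[OF ab(3) _ fe aA] mb by simp
          qed
        qed
        then show "snd (\<pi> b) < snd (\<pi> a)" using ma mb by metis
      qed
      then show ?thesis by simp
    qed
  qed
qed

end

lemma odd_ge3: "odd (q::nat) \<Longrightarrow> q \<noteq> 1 \<Longrightarrow> 3 \<le> q" by presburger
lemma odd_half: "odd (q::nat) \<Longrightarrow> 3 \<le> q \<Longrightarrow> 1 \<le> q div 2 \<and> q div 2 < q \<and> q - 1 - q div 2 = q div 2"
  by presburger
lemma dvd_odd: "(q::nat) dvd x \<Longrightarrow> odd x \<Longrightarrow> odd q"
proof
  assume "q dvd x" "odd x" "even q"
  then have "2 dvd x" using dvd_trans by blast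
  then show False using \<open>odd x\<close> by simp
qed

context bw begin

definition EE :: "nat \<Rightarrow> nat set" where "EE s = {a. a < N ! 0 \<and> xs (0, a) = xs (0, s)}"

lemma EE_fin: "finite (EE s)" by (simp add: EE_def)

lemma EE_card: "s < N ! 0 \<Longrightarrow> card (EE s) = qq"
proof -
  assume s: "s < N ! 0"
  have "card (Blk (0, s)) = qq" using Blk_card[of "(0, s)"] s Ls_iff n0 by simp
  moreover have "card (Blk (0, s)) = card (EE s)" using Blk0[OF s] by (simp add: EE_def card_image inj_on_def)
  ultimately show ?thesis by simp
qed

lemma EE_ix: "s < N ! 0 \<Longrightarrow> ix (0, s) = card {a \<in> EE s. a < s}"
proof -
  assume s: "s < N ! 0"
  have "{l' \<in> Blk (0, s). snd l' < snd (0, s)} = Pair 0 ` {a \<in> EE s. a < s}"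
    using Blk0[OF s] by (auto simp: EE_def)
  then show ?thesis by (simp add: ix_def card_image inj_on_def)
qed

lemma EE_above: "s < N ! 0 \<Longrightarrow> card {a \<in> EE s. s < a} = qq - 1 - ix (0, s) \<and> ix (0, s) \<le> qq - 1"
proof -
  assume s: "s < N ! 0"
  have "{l' \<in> Blk (0, s). snd (0, s) < snd l'} = Pair 0 ` {a \<in> EE s. s < a}"
    using Blk0[OF s] by (auto simp: EE_def)
  then have "card {l' \<in> Blk (0, s). snd (0, s) < snd l'} = card {a \<in> EE s. s < a}"
    by (simp add: card_image inj_on_def)
  then show ?thesis using ix_above[of "(0, s)"] s Ls_iff n0 by simp
qed

lemma self_EE: "s \<in> EE s \<longleftrightarrow> s < N ! 0" by (simp add: EE_def)

lemma ND8: "s < N ! 0 \<Longrightarrow> ix (0, s) = s mod qq"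
proof (induction s)
  case 0
  have "{a \<in> EE 0. a < 0} = {}" by simp
  then show ?case using EE_ix[OF 0] by simp
next
  case (Suc s)
  have sN: "s < N ! 0" using Suc.prems by simp
  note IH = Suc.IH[OF sN]
  note ab = EE_above[OF sN]
  show ?case
  proof (cases "ix (0, s) < qq - 1")
    case True
    then have "card {a \<in> EE s. s < a} \<noteq> 0" using ab by simp
    then have "{a \<in> EE s. s < a} \<noteq> {}" by (metis card.empty)
    then obtain b where b: "b \<in> EE s" "s < b" by blast
    have bN: "b < N ! 0" using b by (simp add: EE_def)
    have "xs (0, s) \<le> xs (0, Suc s)" using xs_mono[OF n0 _ Suc.prems] by simp
    moreover have "xs (0, Suc s) \<le> xs (0, b)" using xs_mono[OF n0 _ bN] b by simp
    moreover have "xs (0, b) = xs (0, s)" using b(1) by (simp add: EE_def)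
    ultimately have eq: "xs (0, Suc s) = xs (0, s)" by linarith
    have EEe: "EE (Suc s) = EE s" unfolding EE_def using eq by simp
    have "{a \<in> EE s. a < Suc s} = insert s {a \<in> EE s. a < s}" using sN by (auto simp: EE_def less_Suc_eq)
    then have "card {a \<in> EE s. a < Suc s} = Suc (ix (0, s))" using EE_ix[OF sN] EE_fin by simp
    then have "ix (0, Suc s) = Suc (s mod qq)" using EE_ix[OF Suc.prems] EEe IH by simp
    moreover have "Suc (s mod qq) \<noteq> qq" using True IH by simp
    ultimately show ?thesis by (simp add: mod_Suc)
  next
    case False
    then have ixq: "ix (0, s) = qq - 1" using ab by simp
    then have "card {a \<in> EE s. s < a} = 0" using ab by simp
    then have none: "{a \<in> EE s. s < a} = {}" using EE_fin by simp
    then have "Suc s \<notin> EE s" by auto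
    then have lt: "xs (0, s) < xs (0, Suc s)"
      using xs_mono[OF n0 _ Suc.prems, of s] Suc.prems by (simp add: EE_def)
    have "{a \<in> EE (Suc s). a < Suc s} = {}"
    proof (rule ccontr)
      assume "{a \<in> EE (Suc s). a < Suc s} \<noteq> {}"
      then obtain a where a: "a \<in> EE (Suc s)" "a < Suc s" by blast
      have "xs (0, a) \<le> xs (0, s)" using xs_mono[OF n0 _ sN] a by simp
      then show False using a lt by (simp add: EE_def)
    qed
    then have "ix (0, Suc s) = 0" using EE_ix[OF Suc.prems] by simp
    moreover have "Suc (s mod qq) = qq" using ixq IH qq_pos by simp
    ultimately show ?thesis by (simp add: mod_Suc)
  qed
qed

lemma EE_pc: "s < N ! 0 \<Longrightarrow> a \<in> EE s \<Longrightarrow> pc a = pc s \<and> a < N ! 0 \<and> fst (\<pi> (0, a)) = fst (\<pi> (0, s))"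
proof -
  assume s: "s < N ! 0" and a: "a \<in> EE s"
  have aN: "a < N ! 0" using a by (simp add: EE_def)
  have "pc a = pc s" using ND4f[OF s] ND4f[OF aN] a by (simp add: EE_def)
  then show ?thesis using aN pc_tg[OF s] pc_tg[OF aN] by simp
qed

lemma ND9: "odd qq"
proof (cases "odd c")
  case True
  have "{a \<in> EE c. a < c} = {}"
  proof (rule ccontr)
    assume "{a \<in> EE c. a < c} \<noteq> {}"
    then obtain a where a: "a \<in> EE c" "a < c" by blast
    note e = EE_pc[OF cN a(1)]
    have "even (pc a)" using e pc_eps True by (simp add: eps_def)
    then have "a \<in> B" using pc_parity[of a] e a(2) by simp
    then have "c \<in> B" using R9[OF a(2) cN] e by simp
    then show False using cC part(4) by auto
  qed
  then have "ix (0, c) = 0" using EE_ix[OF cN] by simp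
  then have "qq dvd c" using ND8[OF cN] by (simp add: mod_eq_0_iff_dvd)
  then show ?thesis using True by (rule dvd_odd)
next
  case False
  have "{a \<in> EE c. c < a} = {}"
  proof (rule ccontr)
    assume "{a \<in> EE c. c < a} \<noteq> {}"
    then obtain a where a: "a \<in> EE c" "c < a" by blast
    note e = EE_pc[OF cN a(1)]
    have "odd (pc a)" using e pc_eps False m_pos by (simp add: eps_def)
    moreover have "a \<in> B" using R9[OF a(2)] e cC by simp
    ultimately show False using pc_parity[of a] e a(2) by simp
  qed
  then have "card {a \<in> EE c. c < a} = 0" by (simp only: card.empty)
  then have "ix (0, c) = qq - 1" using EE_above[OF cN] by linarith
  then have "c mod qq = qq - 1" using ND8[OF cN] by simp
  then have "Suc c mod qq = 0" using qq_pos by (simp add: mod_Suc)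
  then have "qq dvd Suc c" by (simp add: mod_eq_0_iff_dvd)
  then show ?thesis using False by (intro dvd_odd[of qq "Suc c"]) auto
qed

lemma ND10: "qq = 1"
proof (rule ccontr)
  assume ne: "qq \<noteq> 1"
  then have q3: "3 \<le> qq" using ND9 by (intro odd_ge3)
  define h where "h = qq div 2"
  have h: "1 \<le> h" "h < qq" "qq - 1 - h = h" using odd_half[OF ND9 q3] by (simp_all add: h_def)
  let ?H = "{l \<in> Ls. ix l = h}"
  have cl: "\<pi> l \<in> ?H" if lH: "l \<in> ?H" for l
  proof -
    have l: "l \<in> Ls" "ix l = h" using lH by simp_all
    have "ix (\<pi> l) = h"
    proof (cases "prs l")
      case True then show ?thesis using ND7a[OF l(1)] l(2) by simp
    next
      case False then have "rvs l" using ND6[OF l(1)] by simp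
      then show ?thesis using ND7b[OF l(1)] l(2) h(3) by simp
    qed
    then show ?thesis using pi_in[OF l(1)] by simp
  qed
  have cli: "l \<in> ?H \<Longrightarrow> (\<pi> ^^ i) l \<in> ?H" for l i
  proof (induction i)
    case 0 then show ?case by simp
  next
    case (Suc i)
    then have "\<pi> ((\<pi> ^^ i) l) \<in> ?H" by (intro cl)
    then show ?case by simp
  qed
  have qN: "qq \<le> N ! 0"
  proof -
    have "EE 0 \<subseteq> {..<N ! 0}" by (auto simp: EE_def)
    then have "card (EE 0) \<le> card {..<N ! 0}" by (intro card_mono) simp_all
    then have "card (EE 0) \<le> N ! 0" by simp
    then show ?thesis using EE_card[OF N0] by simp
  qed
  have hN: "h < N ! 0" using h qN by simp
  have "(0, h) \<in> ?H" using ND8[OF hN] h hN Ls_iff n0 by simp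
  moreover obtain i where "(\<pi> ^^ i) (0, h) = (0, 0)" using tr[OF _ Ls00, of "(0, h)"] hN Ls_iff n0 by auto
  ultimately have "(0, 0) \<in> ?H" using cli[of "(0, h)"] by metis
  then show False using ND8[OF N0] h by simp
qed

lemma pos_inj: "l1 \<in> Ls \<Longrightarrow> l2 \<in> Ls \<Longrightarrow> pos l1 = pos l2 \<Longrightarrow> l1 = l2"
proof -
  assume l: "l1 \<in> Ls" "l2 \<in> Ls" "pos l1 = pos l2"
  then have "l1 \<in> Blk l2" using pos_Pt by (simp add: Blk_def)
  moreover have "card (Blk l2) = 1" using Blk_card[OF l(2)] ND10 by simp
  moreover obtain x where x: "Blk l2 = {x}" using \<open>card (Blk l2) = 1\<close> by (rule card_1_singletonE)
  ultimately show ?thesis using Blk_self[OF l(2)] by simp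
qed

lemma xs_strict: "r < n \<Longrightarrow> s1 < s2 \<Longrightarrow> s2 < N ! r \<Longrightarrow> xs (r, s1) < xs (r, s2)"
proof -
  assume a: "r < n" "s1 < s2" "s2 < N ! r"
  have le: "xs (r, s1) \<le> xs (r, s2)" using xs_mono[OF a(1) _ a(3)] a(2) by simp
  have l: "(r, s1) \<in> Ls" "(r, s2) \<in> Ls" using a Ls_iff by auto
  have "xs (r, s1) \<noteq> xs (r, s2)"
  proof
    assume "xs (r, s1) = xs (r, s2)"
    then have "pos (r, s1) = pos (r, s2)" using pos_Pt l by simp
    then show False using pos_inj[OF l] a(2) by simp
  qed
  then show ?thesis using le by simp
qed

end

context bw begin

definition PP :: "gpt set" where "PP = pos ` Ls"

lemma PP_mem: "Pt r t \<in> PP \<longleftrightarrow> r < n \<and> (\<exists>s < N ! r. t = xs (r, s))"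
proof
  assume "Pt r t \<in> PP"
  then obtain l where l: "l \<in> Ls" "Pt r t = pos l" by (auto simp: PP_def)
  then have "Pt r t = Pt (fst l) (xs l)" using pos_Pt by simp
  then show "r < n \<and> (\<exists>s < N ! r. t = xs (r, s))" using l(1) Ls_iff by (cases l) auto
next
  assume "r < n \<and> (\<exists>s < N ! r. t = xs (r, s))"
  then obtain s where s: "r < n" "s < N ! r" "t = xs (r, s)" by blast
  then have "(r, s) \<in> Ls" using Ls_iff by simp
  moreover have "pos (r, s) = Pt r t" using pos_Pt[OF \<open>(r, s) \<in> Ls\<close>] s by simp
  ultimately show "Pt r t \<in> PP" unfolding PP_def by (metis image_eqI)
qed

lemma PP_noV: "Vtx \<notin> PP" using pos_Pt by (auto simp: PP_def)

lemma ptsE_PP: "r < n \<Longrightarrow> ptsE PP r = (\<lambda>s. xs (r, s)) ` {..<N ! r}"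
  by (auto simp: ptsE_def PP_mem)

lemma sorted_PP: "r < n \<Longrightarrow> sorted_list_of_set (ptsE PP r) = map (\<lambda>s. xs (r, s)) [0..<N ! r]
    \<and> card (ptsE PP r) = N ! r"
  using sorted_list_image[of "N ! r" "\<lambda>s. xs (r, s)"] xs_strict ptsE_PP by simp

lemma xx_PP: "r < n \<Longrightarrow> s < N ! r \<Longrightarrow> sorted_list_of_set (ptsE PP r) ! s = xs (r, s)"
  using sorted_PP by simp

lemma lab_PP: "r < n \<Longrightarrow> s < N ! r \<Longrightarrow> lab PP r s = pos (r, s)"
  using xx_PP pos_Pt[of "(r, s)"] Ls_iff by (simp add: lab_def)

lemma idx_PP: "l \<in> Ls \<Longrightarrow> idx PP (pos l) = l"
proof -
  assume l: "l \<in> Ls"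
  obtain r s where rs: "l = (r, s)" by (cases l)
  have rn: "r < n" "s < N ! r" using l rs Ls_iff by auto
  have fin: "finite (ptsE PP r)" using ptsE_PP[OF rn(1)] by simp
  have "card {t' \<in> ptsE PP r. t' < sorted_list_of_set (ptsE PP r) ! s} = s"
    using rank_nth[OF fin] sorted_PP[OF rn(1)] rn(2) by simp
  then show ?thesis using pos_Pt[OF l] rs xx_PP[OF rn] by simp
qed

lemma tmin_PP: "r < n \<Longrightarrow> tmin PP r = xs (r, 0)"
proof -
  assume r: "r < n"
  have "Min (ptsE PP r) = xs (r, 0)"
  proof (rule Min_eqI)
    show "finite (ptsE PP r)" using ptsE_PP[OF r] by simp
    show "xs (r, 0) \<in> ptsE PP r" using ptsE_PP[OF r] Npos[OF r] by simp
    fix y assume "y \<in> ptsE PP r"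
    then obtain s where "s < N ! r" "y = xs (r, s)" using ptsE_PP[OF r] by auto
    then show "xs (r, 0) \<le> y" using xs_mono[OF r] by simp
  qed
  then show ?thesis by (simp add: tmin_def)
qed

lemma pos00: "pos (0, 0) = Pt 0 (xs (0, 0))" using pos_Pt[OF Ls00] by simp

lemma star_PP: "star_orbit m n PP"
proof -
  obtain k0 where k0: "(\<pi> ^^ k0) (\<pi> (0, 0)) = (0, 0)" using tr[OF pi_in[OF Ls00] Ls00] by blast
  have k1: "(\<pi> ^^ Suc k0) (0, 0) = (0, 0)" using k0 by (simp only: funpow_Suc_right comp_apply)
  have per: "(fmap m n ^^ Suc k0) (pos (0, 0)) = pos (0, 0)"
    using PosIter[OF Ls00, of "Suc k0"] k1 by simp
  have orb: "PP = {(fmap m n ^^ i) (pos (0, 0)) | i. True}"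
  proof
    show "PP \<subseteq> {(fmap m n ^^ i) (pos (0, 0)) | i. True}"
    proof
      fix y assume "y \<in> PP"
      then obtain l where l: "l \<in> Ls" "y = pos l" by (auto simp: PP_def)
      obtain i where "(\<pi> ^^ i) (0, 0) = l" using tr[OF Ls00 l(1)] by blast
      then have "y = (fmap m n ^^ i) (pos (0, 0))" using PosIter[OF Ls00, of i] l by simp
      then show "y \<in> {(fmap m n ^^ i) (pos (0, 0)) | i. True}" by blast
    qed
    show "{(fmap m n ^^ i) (pos (0, 0)) | i. True} \<subseteq> PP"
      using PosIter[OF Ls00] funpow_in_Ls[OF Ls00] by (auto simp: PP_def)
  qed
  have gam: "pos (0, 0) \<in> gamma n"
    using pos00 xs01[OF Ls00] xs_lt1[OF Ls00] n0 by (auto simp: gamma_def)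
  have po: "periodic_orbit m n PP"
    unfolding periodic_orbit_def using gam per orb by blast
  have nv: "PP \<noteq> {Vtx}" using PP_noV by (auto simp: PP_def)
  have ne: "\<forall>r<n. ptsE PP r \<noteq> {}" using ptsE_PP Npos by auto
  have f0: "fmap m n (pos (0, 0)) = Pt k (xs (\<pi> (0, 0)))"
    using PosF[OF Ls00] pos_Pt[OF pi_in[OF Ls00]] R5 by simp
  have nm: "\<not> (fmap m n ` (PP \<inter> {Pt 0 t | t. True}) \<subseteq> {Pt m t | t. True})"
  proof
    assume "fmap m n ` (PP \<inter> {Pt 0 t | t. True}) \<subseteq> {Pt m t | t. True}"
    moreover have "pos (0, 0) \<in> PP" unfolding PP_def using Ls00 by (rule imageI)
    then have "pos (0, 0) \<in> PP \<inter> {Pt 0 t | t. True}" using pos00 by auto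
    ultimately have "Pt k (xs (\<pi> (0, 0))) \<in> {Pt m t | t. True}" using f0 by (metis image_subset_iff)
    then show False using km by auto
  qed
  have st: "\<forall>r. 0 < r \<and> r < n \<longrightarrow>
        fmap m n (Pt r (tmin PP r)) = Pt ((r + m) mod n) (tmin PP ((r + m) mod n))"
  proof (intro allI impI)
    fix r assume r: "0 < r \<and> r < n"
    have N: "0 < N ! r" using Npos r by simp
    have l: "(r, 0) \<in> Ls" using Ls_iff r N by simp
    have p: "\<pi> (r, 0) = ((r + m) mod n, 0)" using R1[of r 0] R3[of r] r N by (simp add: prod_eq_iff)
    have "fmap m n (Pt r (tmin PP r)) = fmap m n (pos (r, 0))" using pos_Pt[OF l] tmin_PP r by simp
    also have "\<dots> = pos ((r + m) mod n, 0)" using PosF[OF l] p by simp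
    also have "\<dots> = Pt ((r + m) mod n) (tmin PP ((r + m) mod n))"
      using pos_Pt[OF pi_in[OF l]] p tmin_PP[of "(r + m) mod n"] n0 by simp
    finally show "fmap m n (Pt r (tmin PP r)) = Pt ((r + m) mod n) (tmin PP ((r + m) mod n))" .
  qed
  show ?thesis unfolding star_orbit_def using po nv ne nm st by blast
qed

lemma good_PP: "goodP m n PP" using star_good[OF star_PP] .

lemma dataN_PP: "dataN n PP = N"
proof (rule nth_equalityI)
  show "length (dataN n PP) = length N" using lenN by (simp add: dataN_def)
  fix i assume "i < length (dataN n PP)"
  then have i: "i < n" by (simp add: dataN_def)
  then show "dataN n PP ! i = N ! i" using sorted_PP[OF i] by (simp add: dataN_def)
qed

lemma dataPi_PP: "dataPi m n PP = \<pi>"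
proof
  fix l :: "nat \<times> nat"
  obtain r s where rs: "l = (r, s)" by (cases l)
  show "dataPi m n PP l = \<pi> l"
  proof (cases "l \<in> Ls")
    case True
    have rn: "r < n" "s < N ! r" using True rs Ls_iff by auto
    have "idx PP (fmap m n (lab PP r s)) = \<pi> (r, s)"
      using lab_PP[OF rn] PosF[OF True] idx_PP[OF pi_in[OF True]] rs by simp
    then show ?thesis using True rs by (simp add: dataPi_def dataN_PP)
  next
    case False
    then show ?thesis using rs pi_out by (simp add: dataPi_def dataN_PP)
  qed
qed

lemma classify:
  assumes s: "s < N ! 0"
  shows "(s \<noteq> c \<longrightarrow> (loc_rev m n PP (xs (0, s)) \<longleftrightarrow> s \<in> A) \<and> (loc_pres m n PP (xs (0, s)) \<longleftrightarrow> s \<in> B)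
            \<and> loc_inj m n PP (xs (0, s)))
       \<and> (s = c \<longrightarrow> \<not> loc_rev m n PP (xs (0, s)) \<and> \<not> loc_pres m n PP (xs (0, s)) \<and> \<not> loc_inj m n PP (xs (0, s)))"
proof -
  have l: "(0, s) \<in> Ls" using s Ls_iff n0 by simp
  have inP: "Pt 0 (xs (0, s)) \<in> PP" using PP_mem s n0 by auto
  define J where "J = nat \<lfloor>real (2*m+1) * xs (0, s)\<rfloor>"
  have J: "J = pc s" using ND4f[OF s] by (simp add: J_def)
  have tg: "(J + 1) div 2 = fst (\<pi> (0, s))" using pc_tg[OF s] J by simp
  have g: "gj m J (xs (0, s)) = xs (\<pi> (0, s))" using gj_xs0[OF s] J by simp
  define j where "j = fst (\<pi> (0, s))"
  have pj: "\<pi> (0, s) = (j, snd (\<pi> (0, s)))" "snd (\<pi> (0, s)) < N ! j" "j < n"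
    using pi_in'[OF n0 s] by (simp_all add: j_def)
  have tmj: "tmin PP j = xs (j, 0)" using tmin_PP[OF pj(3)] .
  have ge: "xs (j, 0) \<le> xs (\<pi> (0, s))" using xs_mono[OF pj(3) _ pj(2)] pj(1) by (metis le0)
  have P1: "s \<noteq> c \<longrightarrow> (loc_rev m n PP (xs (0, s)) \<longleftrightarrow> s \<in> A) \<and> (loc_pres m n PP (xs (0, s)) \<longleftrightarrow> s \<in> B)
            \<and> loc_inj m n PP (xs (0, s))"
  proof
    assume sc: "s \<noteq> c"
    have ne: "xs (\<pi> (0, s)) \<noteq> xs (j, 0)"
    proof
      assume eq: "xs (\<pi> (0, s)) = xs (j, 0)"
      then have "gj m J (xs (0, s)) = tmin PP ((J + 1) div 2)" using g tg tmj by (simp add: j_def)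
      then have jm: "j = m" using gp_C3[OF good_PP inP J_def] tg by (simp add: j_def)
      have "snd (\<pi> (0, s)) = 0"
      proof (rule ccontr)
        assume "snd (\<pi> (0, s)) \<noteq> 0"
        then have "xs (j, 0) < xs (j, snd (\<pi> (0, s)))" using xs_strict[OF pj(3) _ pj(2)] by simp
        then show False using eq pj(1) by simp
      qed
      then have "\<pi> (0, s) = \<pi> (0, c)" using pic jm pj(1) by simp
      then show False using pi_inj sc by (auto dest: injD)
    qed
    have lt: "tmin PP ((J + 1) div 2) < gj m J (xs (0, s))" using ne ge g tg tmj by (simp add: j_def)
    note ab = gp_AB[OF good_PP inP J_def lt]
    have par: "even J \<longleftrightarrow> s \<in> B" using pc_parity[OF s sc] J by simp
    have AB: "s \<in> A \<longleftrightarrow> s \<notin> B" using ABC_cases[OF s] sc by auto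
    show "(loc_rev m n PP (xs (0, s)) \<longleftrightarrow> s \<in> A) \<and> (loc_pres m n PP (xs (0, s)) \<longleftrightarrow> s \<in> B)
            \<and> loc_inj m n PP (xs (0, s))"
      using ab par AB by (cases "even J") auto
  qed
  have P2: "s = c \<longrightarrow> \<not> loc_rev m n PP (xs (0, s)) \<and> \<not> loc_pres m n PP (xs (0, s)) \<and> \<not> loc_inj m n PP (xs (0, s))"
  proof
    assume sc: "s = c"
    have eq: "gj m J (xs (0, s)) = tmin PP ((J + 1) div 2)" using g tg tmj sc pic by (simp add: j_def)
    have "tmin PP 0 < xs (0, s)" using tmin_PP[OF n0] xs_strict[OF n0 _ s, of 0] sc c0 by simp
    note cn = gp_Cn[OF good_PP inP J_def eq this]
    show "\<not> loc_rev m n PP (xs (0, s)) \<and> \<not> loc_pres m n PP (xs (0, s)) \<and> \<not> loc_inj m n PP (xs (0, s))"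
      using cn by simp
  qed
  show ?thesis using P1 P2 by blast
qed

lemma dataABC_PP: "dataABC m n PP = (A, B, C)"
proof -
  have N0c: "card (ptsE PP 0) = N ! 0" using sorted_PP[OF n0] by simp
  have tt: "s < N ! 0 \<Longrightarrow> sorted_list_of_set (ptsE PP 0) ! s = xs (0, s)" for s using xx_PP[OF n0] by simp
  have Asub: "A \<subseteq> {..<N ! 0}" "B \<subseteq> {..<N ! 0}" "C \<subseteq> {..<N ! 0}" using part(1) by auto
  have eA: "{s. s < N ! 0 \<and> loc_rev m n PP (xs (0, s))} = A"
  proof (intro set_eqI iffI)
    fix s assume "s \<in> {s. s < N ! 0 \<and> loc_rev m n PP (xs (0, s))}"
    then show "s \<in> A" using classify[of s] by (cases "s = c") auto
  next
    fix s assume sA: "s \<in> A"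
    then have s: "s < N ! 0" "s \<noteq> c" using Asub cC part(3) by auto
    then show "s \<in> {s. s < N ! 0 \<and> loc_rev m n PP (xs (0, s))}" using classify[OF s(1)] sA by auto
  qed
  have eB: "{s. s < N ! 0 \<and> loc_pres m n PP (xs (0, s))} = B"
  proof (intro set_eqI iffI)
    fix s assume "s \<in> {s. s < N ! 0 \<and> loc_pres m n PP (xs (0, s))}"
    then show "s \<in> B" using classify[of s] by (cases "s = c") auto
  next
    fix s assume sB: "s \<in> B"
    then have s: "s < N ! 0" "s \<noteq> c" using Asub cC part(4) by auto
    then show "s \<in> {s. s < N ! 0 \<and> loc_pres m n PP (xs (0, s))}" using classify[OF s(1)] sB by auto
  qed
  have eC: "{s. s < N ! 0 \<and> \<not> loc_inj m n PP (xs (0, s))} = C"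
  proof (intro set_eqI iffI)
    fix s assume "s \<in> {s. s < N ! 0 \<and> \<not> loc_inj m n PP (xs (0, s))}"
    then show "s \<in> C" using classify[of s] cC by (cases "s = c") auto
  next
    fix s assume "s \<in> C"
    then have s: "s = c" using cC by simp
    then show "s \<in> {s. s < N ! 0 \<and> \<not> loc_inj m n PP (xs (0, s))}" using classify[OF cN] cN by auto
  qed
  have c1: "{s. s < N ! 0 \<and> loc_rev m n PP (sorted_list_of_set (ptsE PP 0) ! s)} = {s. s < N ! 0 \<and> loc_rev m n PP (xs (0, s))}"
    using tt by (intro Collect_cong) auto
  have c2: "{s. s < N ! 0 \<and> loc_pres m n PP (sorted_list_of_set (ptsE PP 0) ! s)} = {s. s < N ! 0 \<and> loc_pres m n PP (xs (0, s))}"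
    using tt by (intro Collect_cong) auto
  have c3: "{s. s < N ! 0 \<and> \<not> loc_inj m n PP (sorted_list_of_set (ptsE PP 0) ! s)} = {s. s < N ! 0 \<and> \<not> loc_inj m n PP (xs (0, s))}"
    using tt by (intro Collect_cong) auto
  show ?thesis unfolding dataABC_def Let_def N0c c1 c2 c3 eA eB eC ..
qed

lemma backward: "\<exists>P. Pset m n k gB P \<and> dataP m n P = (N, \<pi>, (A, B, C))"
proof (intro exI conjI)
  show "dataP m n PP = (N, \<pi>, (A, B, C))"
    by (simp add: dataP_def dataN_PP dataPi_PP dataABC_PP)
  have "fmap m n (lab PP 0 0) = Pt k (xs (\<pi> (0, 0)))"
    using lab_PP[OF n0 N0] PosF[OF Ls00] pos_Pt[OF pi_in[OF Ls00]] R5 by simp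
  then show "Pset m n k gB PP"
    unfolding Pset_def using star_PP R4 dataABC_PP by auto
qed

end

theorem lemma2p6:
  fixes m n k :: nat and gB :: bool and N :: "nat list"
    and \<pi> :: "nat \<times> nat \<Rightarrow> nat \<times> nat" and A B C :: "nat set"
  assumes "0 < m" and "2 * m \<le> n" and "coprime m n"
    and "k < m" and "k = 0 \<longrightarrow> gB"
    and "inD n (N, \<pi>, (A, B, C))"
  shows "(\<exists>P. Pset m n k gB P \<and> dataP m n P = (N, \<pi>, (A, B, C))) \<longleftrightarrow>
    ((\<forall>r. 0 < r \<and> r < n \<longrightarrow>
        (\<forall>s < N ! r. fst (\<pi> (r, s)) = (r + m) mod n) \<and>
        (\<forall>s1 s2. s1 < s2 \<and> s2 < N ! r \<longrightarrow> snd (\<pi> (r, s1)) < snd (\<pi> (r, s2))) \<and>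
        snd (\<pi> (r, 0)) = 0) \<and>
     0 \<in> (if gB then B else A) \<and>
     fst (\<pi> (0, 0)) = k \<and>
     (\<forall>c\<in>C. \<pi> (0, c) = (m, 0)) \<and>
     (\<forall>s < N ! 0. k \<le> fst (\<pi> (0, s)) \<and> fst (\<pi> (0, s)) \<le> m) \<and>
     (\<forall>s1 s2. s1 \<le> s2 \<and> s2 < N ! 0 \<longrightarrow> fst (\<pi> (0, s1)) \<le> fst (\<pi> (0, s2))) \<and>
     (\<forall>s1 s2. s1 < s2 \<and> s2 < N ! 0 \<and> fst (\<pi> (0, s1)) = fst (\<pi> (0, s2)) \<and> s1 \<in> B \<union> C
        \<longrightarrow> s2 \<in> B) \<and>
     (\<forall>s1 s2. s1 < s2 \<and> s2 < N ! 0 \<and> fst (\<pi> (0, s1)) = fst (\<pi> (0, s2)) \<and> s1 \<in> A \<and> s2 \<in> A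
        \<longrightarrow> snd (\<pi> (0, s1)) > snd (\<pi> (0, s2))) \<and>
     (\<forall>s1 s2. s1 < s2 \<and> s2 < N ! 0 \<and> fst (\<pi> (0, s1)) = fst (\<pi> (0, s2)) \<and> s1 \<in> B \<and> s2 \<in> B
        \<longrightarrow> snd (\<pi> (0, s1)) < snd (\<pi> (0, s2))))"
proof -
  interpret mn m n using assms(1-3) by unfold_locales
  show ?thesis
  proof
    assume "\<exists>P. Pset m n k gB P \<and> dataP m n P = (N, \<pi>, (A, B, C))"
    then obtain P where P: "Pset m n k gB P" "dataP m n P = (N, \<pi>, (A, B, C))" by blast
    have "rhs m n k gB N \<pi> A B C" using forward[OF P assms(6) assms(4)] .
    then show "(\<forall>r. 0 < r \<and> r < n \<longrightarrow>
        (\<forall>s < N ! r. fst (\<pi> (r, s)) = (r + m) mod n) \<and>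
        (\<forall>s1 s2. s1 < s2 \<and> s2 < N ! r \<longrightarrow> snd (\<pi> (r, s1)) < snd (\<pi> (r, s2))) \<and>
        snd (\<pi> (r, 0)) = 0) \<and>
     0 \<in> (if gB then B else A) \<and>
     fst (\<pi> (0, 0)) = k \<and>
     (\<forall>c\<in>C. \<pi> (0, c) = (m, 0)) \<and>
     (\<forall>s < N ! 0. k \<le> fst (\<pi> (0, s)) \<and> fst (\<pi> (0, s)) \<le> m) \<and>
     (\<forall>s1 s2. s1 \<le> s2 \<and> s2 < N ! 0 \<longrightarrow> fst (\<pi> (0, s1)) \<le> fst (\<pi> (0, s2))) \<and>
     (\<forall>s1 s2. s1 < s2 \<and> s2 < N ! 0 \<and> fst (\<pi> (0, s1)) = fst (\<pi> (0, s2)) \<and> s1 \<in> B \<union> C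
        \<longrightarrow> s2 \<in> B) \<and>
     (\<forall>s1 s2. s1 < s2 \<and> s2 < N ! 0 \<and> fst (\<pi> (0, s1)) = fst (\<pi> (0, s2)) \<and> s1 \<in> A \<and> s2 \<in> A
        \<longrightarrow> snd (\<pi> (0, s1)) > snd (\<pi> (0, s2))) \<and>
     (\<forall>s1 s2. s1 < s2 \<and> s2 < N ! 0 \<and> fst (\<pi> (0, s1)) = fst (\<pi> (0, s2)) \<and> s1 \<in> B \<and> s2 \<in> B
        \<longrightarrow> snd (\<pi> (0, s1)) < snd (\<pi> (0, s2)))"
      unfolding rhs_def .
  next
    assume H: "(\<forall>r. 0 < r \<and> r < n \<longrightarrow>
        (\<forall>s < N ! r. fst (\<pi> (r, s)) = (r + m) mod n) \<and>
        (\<forall>s1 s2. s1 < s2 \<and> s2 < N ! r \<longrightarrow> snd (\<pi> (r, s1)) < snd (\<pi> (r, s2))) \<and>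
        snd (\<pi> (r, 0)) = 0) \<and>
     0 \<in> (if gB then B else A) \<and>
     fst (\<pi> (0, 0)) = k \<and>
     (\<forall>c\<in>C. \<pi> (0, c) = (m, 0)) \<and>
     (\<forall>s < N ! 0. k \<le> fst (\<pi> (0, s)) \<and> fst (\<pi> (0, s)) \<le> m) \<and>
     (\<forall>s1 s2. s1 \<le> s2 \<and> s2 < N ! 0 \<longrightarrow> fst (\<pi> (0, s1)) \<le> fst (\<pi> (0, s2))) \<and>
     (\<forall>s1 s2. s1 < s2 \<and> s2 < N ! 0 \<and> fst (\<pi> (0, s1)) = fst (\<pi> (0, s2)) \<and> s1 \<in> B \<union> C
        \<longrightarrow> s2 \<in> B) \<and>
     (\<forall>s1 s2. s1 < s2 \<and> s2 < N ! 0 \<and> fst (\<pi> (0, s1)) = fst (\<pi> (0, s2)) \<and> s1 \<in> A \<and> s2 \<in> A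
        \<longrightarrow> snd (\<pi> (0, s1)) > snd (\<pi> (0, s2))) \<and>
     (\<forall>s1 s2. s1 < s2 \<and> s2 < N ! 0 \<and> fst (\<pi> (0, s1)) = fst (\<pi> (0, s2)) \<and> s1 \<in> B \<and> s2 \<in> B
        \<longrightarrow> snd (\<pi> (0, s1)) < snd (\<pi> (0, s2)))"
    then have r: "rhs m n k gB N \<pi> A B C" unfolding rhs_def .
    have "card C = 1" using assms(6) by (simp add: inD_def)
    then obtain c where c: "C = {c}" by (rule card_1_singletonE)
    interpret bw m n k gB N \<pi> A B C c
      using assms(4,5,6) r c by unfold_locales
    show "\<exists>P. Pset m n k gB P \<and> dataP m n P = (N, \<pi>, (A, B, C))" by (rule backward)
  qed
qed

end
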